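(* Fix constants $\sigma_f^2>0$, $\sigma_a^2\ge 0$ and $\alpha\in\mathbb{R}$ with $|\alpha|\le\sigma_f$, and an integer $n\ge 1$. Let $\mathcal{C}$ be the class of all distributions (in the sense of the context) with $\operatorname{Var}(f(z))=\sigma_f^2$, $\mathbb{E}_z[\operatorname{Var}(Y(z))]=\sigma_a^2$ and $\operatorname{Cov}(f(z),g(z))=\alpha$. Let $\rho=\alpha/\sigma_f$ and define the control variates estimator $$\hat\mu_{\mathrm{cv}}=\frac{1}{n}\sum_{i=1}^n \bigl(y^{(i)}-\alpha\, g(z^{(i)})\bigr).$$ Then (i) for every distribution in $\mathcal{C}$, $$\operatorname{Var}(\hat\mu_{\mathrm{cv}})=\frac{1}{n}\bigl(\sigma_f^2(1-\rho^2)+\sigma_a^2\bigr);$$ and (ii) for every estimator $\hat\mu$ that is a (measurable) function of $(y^{(i)},g(z^{(i)}))_{i=1}^n$ and is unbiased for $\mu$ (i.e. $\mathbb{E}[\hat\mu]=\mu$) under every distribution in $\mathcal{C}$, one has $$\sup_{\mathcal{C}}\operatorname{Var}(\hat\mu)\ \ge\ \frac{1}{n}\bigl(\sigma_f^2(1-\rho^2)+\sigma_a^2\bigr)=\sup_{\mathcal{C}}\operatorname{Var}(\hat\mu_{\mathrm{cv}}),$$ i.e. no unbiased estimator has lower worst-case variance than $\hat\mu_{\mathrm{cv}}$.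
   Context: Setting: a "distribution" consists of a random input $z$ taking values in some measurable space (in the paper's application, $z$ is uniform over a finite set of system outputs), a measurable real function $g$ (the automatic metric) normalized so that $\mathbb{E}[g(z)]=0$ and $\operatorname{Var}(g(z))=1$, and, for each $z$, a real random variable $Y(z)$ (a human judgment) with finite second moment. Define the human metric $f(z)=\mathbb{E}[Y(z)\mid z]$, the target $\mu=\mathbb{E}_z[f(z)]$, $\sigma_f^2=\operatorname{Var}(f(z))$ and $\sigma_a^2=\mathbb{E}_z[\operatorname{Var}(Y(z)\mid z)]$. Sampling: $z^{(1)},\dots,z^{(n)}$ are drawn independently from the distribution of $z$, and given them $y^{(i)}=Y(z^{(i)})$ are drawn independently (human judgments on different samples are independent given the $z^{(i)}$). The constant $\alpha$ is treated as known. *)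

theory Defs
  imports "HOL-Probability.Probability"
begin

text \<open>A "distribution" in the sense of the paper: a law for the input z,
  the automatic metric g, and for each z the law of the human judgment Y(z)
  (a Markov kernel).\<close>
record 'z hdist =
  zlaw :: "'z measure"
  gmet :: "'z \<Rightarrow> real"
  ylaw :: "'z \<Rightarrow> real measure"

text \<open>Variance with values in ennreal (infinite if X is not square integrable).\<close>
definition ennvar :: "'a measure \<Rightarrow> ('a \<Rightarrow> real) \<Rightarrow> ennreal" where
  "ennvar M X = (\<integral>\<^sup>+ x. ennreal ((X x - (\<integral>y. X y \<partial>M))^2) \<partial>M)"

definition valid_dist :: "('z, 'b) hdist_scheme \<Rightarrow> bool" where
  "valid_dist D \<longleftrightarrow>
     prob_space (zlaw D) \<and>
     gmet D \<in> borel_measurable (zlaw D) \<and>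
     ylaw D \<in> measurable (zlaw D) (subprob_algebra borel) \<and>
     (\<forall>z\<in>space (zlaw D). prob_space (ylaw D z) \<and> integrable (ylaw D z) (\<lambda>y. y^2)) \<and>
     integrable (zlaw D) (gmet D) \<and> (\<integral>z. gmet D z \<partial>zlaw D) = 0 \<and>
     ennvar (zlaw D) (gmet D) = 1"

definition human_metric :: "('z, 'b) hdist_scheme \<Rightarrow> 'z \<Rightarrow> real" where
  "human_metric D z = (\<integral>y. y \<partial>ylaw D z)"

definition target :: "('z, 'b) hdist_scheme \<Rightarrow> real" where
  "target D = (\<integral>z. human_metric D z \<partial>zlaw D)"

definition in_class :: "real \<Rightarrow> real \<Rightarrow> real \<Rightarrow> ('z, 'b) hdist_scheme \<Rightarrow> bool" where
  "in_class sf2 sa2 \<alpha> D \<longleftrightarrow>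
     valid_dist D \<and>
     ennvar (zlaw D) (human_metric D) = ennreal sf2 \<and>
     (\<integral>\<^sup>+ z. ennvar (ylaw D z) (\<lambda>y. y) \<partial>zlaw D) = ennreal sa2 \<and>
     integrable (zlaw D) (\<lambda>z. (human_metric D z - target D) * (gmet D z - (\<integral>x. gmet D x \<partial>zlaw D))) \<and>
     (\<integral>z. (human_metric D z - target D) * (gmet D z - (\<integral>x. gmet D x \<partial>zlaw D)) \<partial>zlaw D) = \<alpha>"

definition dist_class :: "real \<Rightarrow> real \<Rightarrow> real \<Rightarrow> 'z hdist set" where
  "dist_class sf2 sa2 \<alpha> = {D. in_class sf2 sa2 \<alpha> D}"

definition joint_law :: "('z, 'b) hdist_scheme \<Rightarrow> ('z \<times> real) measure" where
  "joint_law D = zlaw D \<bind> (\<lambda>z. distr (ylaw D z) (zlaw D \<Otimes>\<^sub>M borel) (\<lambda>y. (z, y)))"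

definition sample_space :: "nat \<Rightarrow> ('z, 'b) hdist_scheme \<Rightarrow> (nat \<Rightarrow> 'z \<times> real) measure" where
  "sample_space n D = (\<Pi>\<^sub>M i\<in>{..<n}. joint_law D)"

definition obs :: "nat \<Rightarrow> ('z, 'b) hdist_scheme \<Rightarrow> (nat \<Rightarrow> 'z \<times> real) \<Rightarrow> nat \<Rightarrow> real \<times> real" where
  "obs n D \<omega> = (\<lambda>i\<in>{..<n}. (snd (\<omega> i), gmet D (fst (\<omega> i))))"

definition cv_est :: "nat \<Rightarrow> real \<Rightarrow> ('z, 'b) hdist_scheme \<Rightarrow> (nat \<Rightarrow> 'z \<times> real) \<Rightarrow> real" where
  "cv_est n \<alpha> D \<omega> = (\<Sum>i<n. snd (\<omega> i) - \<alpha> * gmet D (fst (\<omega> i))) / real n"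

end

theory Submission
  imports Defs
begin

lemma sq_int_mult:
  fixes f g :: "'a \<Rightarrow> real"
  assumes [measurable]: "f \<in> borel_measurable M" "g \<in> borel_measurable M"
    and "integrable M (\<lambda>x. f x ^ 2)" "integrable M (\<lambda>x. g x ^ 2)"
  shows "integrable M (\<lambda>x. f x * g x)"
proof (rule Bochner_Integration.integrable_bound[where f="\<lambda>x. f x ^ 2 + g x ^ 2"])
  show "integrable M (\<lambda>x. f x ^ 2 + g x ^ 2)" using assms by auto
  show "AE x in M. norm (f x * g x) \<le> norm (f x ^ 2 + g x ^ 2)"
  proof (rule AE_I2)
    fix x
    have "0 \<le> (\<bar>f x\<bar> - \<bar>g x\<bar>)^2" by simp
    then have "2 * \<bar>f x\<bar> * \<bar>g x\<bar> \<le> f x ^ 2 + g x ^ 2" by (simp add: power2_eq_square algebra_simps)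
    moreover have "\<bar>f x\<bar> * \<bar>g x\<bar> \<le> 2 * \<bar>f x\<bar> * \<bar>g x\<bar>" by simp
    ultimately have "\<bar>f x\<bar> * \<bar>g x\<bar> \<le> f x ^ 2 + g x ^ 2" by linarith
    then show "norm (f x * g x) \<le> norm (f x ^ 2 + g x ^ 2)"
      by (simp add: abs_mult)
  qed
qed measurable

lemma sq_int_imp_int:
  fixes f :: "'a \<Rightarrow> real"
  assumes "finite_measure M" and [measurable]: "f \<in> borel_measurable M"
    and "integrable M (\<lambda>x. f x ^ 2)"
  shows "integrable M f"
proof -
  interpret finite_measure M by fact
  have "integrable M (\<lambda>x. f x * 1)"
    by (rule sq_int_mult) (use assms in auto)
  then show ?thesis by simp
qed

lemma sq_int_add:
  fixes f g :: "'a \<Rightarrow> real"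
  assumes [measurable]: "f \<in> borel_measurable M" "g \<in> borel_measurable M"
    and "integrable M (\<lambda>x. f x ^ 2)" "integrable M (\<lambda>x. g x ^ 2)"
  shows "integrable M (\<lambda>x. (f x + g x) ^ 2)"
proof -
  have "integrable M (\<lambda>x. f x * g x)" by (rule sq_int_mult) (use assms in auto)
  then have "integrable M (\<lambda>x. f x ^ 2 + 2 * (f x * g x) + g x ^ 2)"
    using assms by auto
  then show ?thesis by (simp add: power2_eq_square algebra_simps)
qed

lemma sq_int_cmult:
  fixes f :: "'a \<Rightarrow> real"
  assumes "integrable M (\<lambda>x. f x ^ 2)"
  shows "integrable M (\<lambda>x. (c * f x) ^ 2)"
  using integrable_mult_left[OF assms, of "c^2"] by (simp add: power_mult_distrib)

lemma sq_int_const: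
  assumes "finite_measure M"
  shows "integrable M (\<lambda>x. (c::real) ^ 2)"
proof -
  interpret finite_measure M by fact
  show ?thesis by simp
qed

lemma cauchy_schwarz_int:
  fixes f g :: "'a \<Rightarrow> real"
  assumes [measurable]: "f \<in> borel_measurable M" "g \<in> borel_measurable M"
    and fi: "integrable M (\<lambda>x. f x ^ 2)" and gi: "integrable M (\<lambda>x. g x ^ 2)"
  shows "(\<integral>x. f x * g x \<partial>M) ^ 2 \<le> (\<integral>x. f x ^ 2 \<partial>M) * (\<integral>x. g x ^ 2 \<partial>M)"
proof -
  define A where "A = (\<integral>x. f x ^ 2 \<partial>M)"
  define B where "B = (\<integral>x. f x * g x \<partial>M)"
  define C where "C = (\<integral>x. g x ^ 2 \<partial>M)"
  have fg: "integrable M (\<lambda>x. f x * g x)" by (rule sq_int_mult) (use assms in auto)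
  have key: "0 \<le> A - 2 * l * B + l^2 * C" for l
  proof -
    have "0 \<le> (\<integral>x. (f x - l * g x)^2 \<partial>M)" by simp
    also have "(\<integral>x. (f x - l * g x)^2 \<partial>M) = (\<integral>x. f x ^ 2 - 2 * l * (f x * g x) + l^2 * g x ^ 2 \<partial>M)"
      by (rule Bochner_Integration.integral_cong) (auto simp: power2_eq_square algebra_simps)
    also have "\<dots> = A - 2 * l * B + l^2 * C"
      using fi gi fg unfolding A_def B_def C_def by simp
    finally show ?thesis .
  qed
  have C0: "0 \<le> C" unfolding C_def by simp
  show ?thesis
  proof (cases "C = 0")
    case True
    have "B = 0"
    proof (rule ccontr)
      assume "B \<noteq> 0"
      have "0 \<le> A - 2 * ((A + 1) / (2 * B)) * B + ((A + 1) / (2 * B))^2 * C" by (rule key)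
      with \<open>B \<noteq> 0\<close> True show False by (simp add: field_simps)
    qed
    then show ?thesis unfolding A_def[symmetric] B_def[symmetric] C_def[symmetric] by (simp add: True)
  next
    case False
    with C0 have "C > 0" by simp
    have "0 \<le> A - 2 * (B / C) * B + (B / C)^2 * C" by (rule key)
    then have "0 \<le> A - B^2 / C" using \<open>C > 0\<close> by (simp add: power2_eq_square field_simps)
    then have "B^2 / C \<le> A" by simp
    then have "B^2 \<le> A * C" using \<open>C > 0\<close> by (simp add: field_simps)
    then show ?thesis unfolding A_def[symmetric] B_def[symmetric] C_def[symmetric] .
  qed
qed

lemma ennvar_eq:
  fixes f :: "'a \<Rightarrow> real"
  assumes "prob_space M" and [measurable]: "f \<in> borel_measurable M"
    and "integrable M (\<lambda>x. f x ^ 2)"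
  shows "ennvar M f = ennreal (\<integral>x. (f x - (\<integral>y. f y \<partial>M))^2 \<partial>M)"
proof -
  interpret prob_space M by fact
  have "integrable M (\<lambda>x. (f x + (- (\<integral>y. f y \<partial>M)))^2)"
    by (rule sq_int_add) (use assms in \<open>auto intro: sq_int_const\<close>)
  then show ?thesis unfolding ennvar_def
    by (intro nn_integral_eq_integral) auto
qed

lemma ennvar_finite_sq_int:
  fixes f :: "'a \<Rightarrow> real"
  assumes "prob_space M" and [measurable]: "f \<in> borel_measurable M"
    and "ennvar M f \<noteq> \<infinity>"
  shows "integrable M (\<lambda>x. f x ^ 2)"
proof -
  interpret prob_space M by fact
  define m where "m = (\<integral>y. f y \<partial>M)"
  have "integrable M (\<lambda>x. (f x - m)^2)"
    using assms(3) unfolding ennvar_def m_def[symmetric]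
    by (intro integrableI_nn_integral_finite[where x="enn2real (\<integral>\<^sup>+ x. ennreal ((f x - m)^2) \<partial>M)"])
       (auto simp: less_top[symmetric])
  then have "integrable M (\<lambda>x. (f x - m + m)^2)"
    by (intro sq_int_add) (auto intro: sq_int_const)
  then show ?thesis by simp
qed

lemma iid_var:
  fixes J :: "'a measure" and P :: "'a \<Rightarrow> real" and n :: nat
  assumes Jp: "prob_space J" and Pm[measurable]: "P \<in> borel_measurable J"
    and Psq: "integrable J (\<lambda>x. (P x)^2)" and Pmean: "(\<integral>x. P x \<partial>J) = m"
    and Pvar: "(\<integral>x. (P x - m)^2 \<partial>J) = Wv" and n: "n \<ge> 1"
  shows "ennvar (PiM {..<n} (\<lambda>_. J)) (\<lambda>\<omega>. (\<Sum>i<n. P (\<omega> i)) / real n) = ennreal (Wv / real n)"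
proof -
  define I where "I = {..<n}"
  define \<Omega> where "\<Omega> = PiM I (\<lambda>_. J)"
  interpret PP: product_prob_space "\<lambda>_::nat. J" by (rule product_prob_spaceI) (rule Jp)
  interpret J: prob_space J by (rule Jp)
  interpret O: prob_space \<Omega> unfolding \<Omega>_def by (rule prob_space_PiM) (rule Jp)
  have fin: "finite I" unfolding I_def by simp
  define Q where "Q x = P x - m" for x
  have Qm[measurable]: "Q \<in> borel_measurable J" unfolding Q_def by simp
  have Pi: "integrable J P" by (rule sq_int_imp_int[OF prob_space.finite_measure[OF Jp] Pm Psq])
  have Qsq: "integrable J (\<lambda>x. (Q x)^2)" unfolding Q_def
    by (rule sq_int_add[where g="\<lambda>_. -m", simplified]) (auto simp: Psq)
  have Qi: "integrable J Q" unfolding Q_def using Pi by simp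
  have Q0: "(\<integral>x. Q x \<partial>J) = 0" unfolding Q_def using Pi Pmean by (simp add: prob_space.prob_space[OF Jp])
  have QW: "(\<integral>x. (Q x)^2 \<partial>J) = Wv" unfolding Q_def using Pvar .
  have comp: "integrable \<Omega> (\<lambda>\<omega>. F (\<omega> i)) \<and> (\<integral>\<omega>. F (\<omega> i) \<partial>\<Omega>) = (\<integral>x. F x \<partial>J)"
    if i: "i \<in> I" and [measurable]: "F \<in> borel_measurable J" and Fi: "integrable J F" for i and F :: "'a \<Rightarrow> real"
  proof -
    have d: "distr \<Omega> J (\<lambda>\<omega>. \<omega> i) = J"
      unfolding \<Omega>_def by (rule distr_PiM_component) (use i Jp in auto)
    have m[measurable]: "(\<lambda>\<omega>. \<omega> i) \<in> measurable \<Omega> J"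
      unfolding \<Omega>_def using i by simp
    have "integrable \<Omega> (\<lambda>\<omega>. F (\<omega> i))"
      using Fi integrable_distr_eq[OF m, of F] d by simp
    moreover have "(\<integral>\<omega>. F (\<omega> i) \<partial>\<Omega>) = (\<integral>x. F x \<partial>J)"
      using integral_distr[OF m, of F] d by simp
    ultimately show ?thesis by simp
  qed
  have cross: "integrable \<Omega> (\<lambda>\<omega>. Q (\<omega> i) * Q (\<omega> j)) \<and> (\<integral>\<omega>. Q (\<omega> i) * Q (\<omega> j) \<partial>\<Omega>) = (if i = j then Wv else 0)"
    if i: "i \<in> I" and j: "j \<in> I" for i j
  proof (cases "i = j")
    case True
    then show ?thesis using comp[OF i _ Qsq] QW by (simp add: power2_eq_square)
  next
    case False
    define h where "h k x = (if k = i then Q x else 1) * (if k = j then Q x else 1)" for k x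
    have c1: "integrable J (\<lambda>x. 1::real)"
      by (rule finite_measure.integrable_const[OF prob_space.finite_measure[OF Jp]])
    have hi: "integrable J (h k)" for k unfolding h_def using Qi Qsq c1
      by (cases "k = i"; cases "k = j") (simp_all add: power2_eq_square)
    have hp: "(\<Prod>k\<in>I. h k (\<omega> k)) = Q (\<omega> i) * Q (\<omega> j)" for \<omega>
      unfolding h_def prod.distrib using i j fin by (simp add: prod.delta)
    have "integrable \<Omega> (\<lambda>\<omega>. \<Prod>k\<in>I. h k (\<omega> k))"
      unfolding \<Omega>_def by (rule PP.product_integrable_prod[OF fin hi])
    moreover have "(\<integral>\<omega>. (\<Prod>k\<in>I. h k (\<omega> k)) \<partial>\<Omega>) = (\<Prod>k\<in>I. integral\<^sup>L J (h k))"
      unfolding \<Omega>_def by (rule PP.product_integral_prod[OF fin hi])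
    moreover have "(\<Prod>k\<in>I. integral\<^sup>L J (h k)) = 0"
    proof (rule prod_zero[OF fin])
      have "h i = Q" using False by (auto simp: h_def fun_eq_iff)
      then show "\<exists>k\<in>I. integral\<^sup>L J (h k) = 0" using i Q0 by (intro bexI[of _ i]) auto
    qed
    ultimately show ?thesis using False by (simp add: hp)
  qed
  define X where "X \<omega> = (\<Sum>i\<in>I. Q (\<omega> i))" for \<omega>
  have X2: "(X \<omega>)^2 = (\<Sum>i\<in>I. \<Sum>j\<in>I. Q (\<omega> i) * Q (\<omega> j))" for \<omega>
    unfolding X_def power2_eq_square sum_product ..
  have X2i: "integrable \<Omega> (\<lambda>\<omega>. (X \<omega>)^2)"
    unfolding X2 using cross by (intro Bochner_Integration.integrable_sum) auto
  have X2v: "(\<integral>\<omega>. (X \<omega>)^2 \<partial>\<Omega>) = real n * Wv"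
  proof -
    have "(\<integral>\<omega>. (X \<omega>)^2 \<partial>\<Omega>) = (\<Sum>i\<in>I. \<Sum>j\<in>I. \<integral>\<omega>. Q (\<omega> i) * Q (\<omega> j) \<partial>\<Omega>)"
      unfolding X2 using cross
      by (subst Bochner_Integration.integral_sum) (auto intro!: Bochner_Integration.integrable_sum sum.cong Bochner_Integration.integral_sum)
    also have "\<dots> = (\<Sum>i\<in>I. \<Sum>j\<in>I. if i = j then Wv else 0)"
      using cross by (intro sum.cong refl) auto
    also have "\<dots> = real n * Wv" using fin by (simp add: I_def)
    finally show ?thesis .
  qed
  have Pc: "integrable \<Omega> (\<lambda>\<omega>. P (\<omega> i)) \<and> (\<integral>\<omega>. P (\<omega> i) \<partial>\<Omega>) = m" if "i \<in> I" for i
    using comp[OF that Pm Pi] Pmean by simp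
  have mean: "(\<integral>\<omega>. (\<Sum>i<n. P (\<omega> i)) / real n \<partial>\<Omega>) = m"
  proof -
    have "(\<integral>\<omega>. (\<Sum>i<n. P (\<omega> i)) / real n \<partial>\<Omega>) = (\<Sum>i<n. \<integral>\<omega>. P (\<omega> i) \<partial>\<Omega>) / real n"
      using Pc unfolding I_def by (subst integral_divide_zero, subst Bochner_Integration.integral_sum) auto
    also have "\<dots> = m" using Pc n unfolding I_def by simp
    finally show ?thesis .
  qed
  have diff: "(\<Sum>i<n. P (\<omega> i)) / real n - m = X \<omega> / real n" for \<omega>
  proof -
    have "X \<omega> = (\<Sum>i<n. P (\<omega> i)) - real n * m"
      unfolding X_def Q_def I_def by (simp add: sum_subtractf)
    then show ?thesis using n by (simp add: field_simps)
  qed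
  have "ennvar \<Omega> (\<lambda>\<omega>. (\<Sum>i<n. P (\<omega> i)) / real n) = (\<integral>\<^sup>+\<omega>. ennreal ((X \<omega> / real n)^2) \<partial>\<Omega>)"
    unfolding ennvar_def mean diff ..
  also have "\<dots> = (\<integral>\<^sup>+\<omega>. ennreal ((X \<omega>)^2 / (real n)^2) \<partial>\<Omega>)"
    by (simp add: power_divide)
  also have "\<dots> = ennreal (\<integral>\<omega>. (X \<omega>)^2 / (real n)^2 \<partial>\<Omega>)"
    using X2i by (intro nn_integral_eq_integral) auto
  also have "(\<integral>\<omega>. (X \<omega>)^2 / (real n)^2 \<partial>\<Omega>) = Wv / real n"
    using X2v n by (simp add: power2_eq_square)
  finally show ?thesis unfolding \<Omega>_def I_def .
qed

lemma hbi: "integrable M f \<Longrightarrow> integral\<^sup>L M f = x \<Longrightarrow> has_bochner_integral M f x"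
  using has_bochner_integral_integrable by blast

locale cls =
  fixes sf2 sa2 al :: real and D :: "('z, 'b) hdist_scheme"
  assumes cls: "in_class sf2 sa2 al D" and sa2_nn: "sa2 \<ge> 0" and sf2_nn: "sf2 \<ge> 0"
begin

abbreviation "Z \<equiv> zlaw D"
abbreviation "K \<equiv> ylaw D"
abbreviation "g \<equiv> gmet D"
abbreviation "f \<equiv> human_metric D"
abbreviation "mu \<equiv> target D"

lemma vd: "valid_dist D" using cls by (simp add: in_class_def)
lemma Zp: "prob_space Z" using vd by (simp add: valid_dist_def)
lemma g_meas[measurable]: "g \<in> borel_measurable Z" using vd by (simp add: valid_dist_def)
lemma K_meas[measurable]: "K \<in> measurable Z (subprob_algebra borel)" using vd by (simp add: valid_dist_def)
lemma Kp: "z \<in> space Z \<Longrightarrow> prob_space (K z)" using vd by (simp add: valid_dist_def)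
lemma K_sq: "z \<in> space Z \<Longrightarrow> integrable (K z) (\<lambda>y. y^2)" using vd by (simp add: valid_dist_def)
lemma g_int: "integrable Z g" and g_mean: "(\<integral>z. g z \<partial>Z) = 0" and g_var: "ennvar Z g = 1"
  using vd by (simp_all add: valid_dist_def)
lemma sets_K: "z \<in> space Z \<Longrightarrow> sets (K z) = sets borel"
  using K_meas by (rule subprob_measurableD(2))

lemma f_meas[measurable]: "f \<in> borel_measurable Z"
proof -
  have "(\<lambda>z. integral\<^sup>L (K z) (\<lambda>y. y)) \<in> borel_measurable Z"
    by (rule measurable_compose[OF K_meas integral_measurable_subprob_algebra]) simp
  then show ?thesis unfolding human_metric_def[abs_def] .
qed

lemma f_var: "ennvar Z f = ennreal sf2" using cls by (simp add: in_class_def)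
lemma EV: "(\<integral>\<^sup>+ z. ennvar (K z) (\<lambda>y. y) \<partial>Z) = ennreal sa2" using cls by (simp add: in_class_def)
lemma cov: "integrable Z (\<lambda>z. (f z - mu) * g z)" "(\<integral>z. (f z - mu) * g z \<partial>Z) = al"
  using cls by (simp_all add: in_class_def g_mean)

lemma f_sq: "integrable Z (\<lambda>z. (f z)^2)"
  by (rule ennvar_finite_sq_int[OF Zp f_meas]) (simp add: f_var)
lemma g_sq: "integrable Z (\<lambda>z. (g z)^2)"
  by (rule ennvar_finite_sq_int[OF Zp g_meas]) (simp add: g_var)
lemma f_int: "integrable Z f"
  by (rule sq_int_imp_int[OF prob_space.finite_measure[OF Zp] f_meas f_sq])

lemma f_mean: "(\<integral>z. f z \<partial>Z) = mu" by (simp add: target_def)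

lemma f_var_real: "(\<integral>z. (f z - mu)^2 \<partial>Z) = sf2"
proof -
  have "ennreal (\<integral>z. (f z - mu)^2 \<partial>Z) = ennreal sf2"
    using ennvar_eq[OF Zp f_meas f_sq] f_var by (simp add: f_mean)
  then show ?thesis using sf2_nn by (subst (asm) ennreal_inj) auto
qed

lemma g_var_real: "(\<integral>z. (g z)^2 \<partial>Z) = 1"
proof -
  have "ennreal (\<integral>z. (g z)^2 \<partial>Z) = ennreal 1"
    using ennvar_eq[OF Zp g_meas g_sq] g_var by (simp add: g_mean)
  then show ?thesis by (subst (asm) ennreal_inj) auto
qed

lemma outer:
  "integrable Z (\<lambda>z. (f z - al * g z - c)^2)"
  "(\<integral>z. (f z - al * g z - c)^2 \<partial>Z) = sf2 - al^2 + (mu - c)^2"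
proof -
  interpret prob_space Z by (rule Zp)
  have e: "(f z - al * g z - c)^2 = (f z - mu)^2 - (2 * al) * ((f z - mu) * g z) + al^2 * (g z)^2
     + (2 * (mu - c)) * (f z - mu) - (2 * al * (mu - c)) * g z + (mu - c)^2" for z
    by (simp add: power2_eq_square algebra_simps)
  have i1: "integrable Z (\<lambda>z. (f z - mu)^2)"
    by (rule sq_int_add[where g="\<lambda>_. - mu", simplified]) (auto simp: f_sq)
  have i2: "integrable Z (\<lambda>z. f z - mu)" using f_int by simp
  have m2: "(\<integral>z. f z - mu \<partial>Z) = 0" using f_int f_mean by (simp add: prob_space)
  have h: "has_bochner_integral Z (\<lambda>z. (f z - mu)^2 - (2 * al) * ((f z - mu) * g z) + al^2 * (g z)^2
     + (2 * (mu - c)) * (f z - mu) - (2 * al * (mu - c)) * g z + (mu - c)^2)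
     (sf2 - (2 * al) * al + al^2 * 1 + (2 * (mu - c)) * 0 - (2 * al * (mu - c)) * 0 + (mu - c)^2)"
    by (intro has_bochner_integral_add has_bochner_integral_diff has_bochner_integral_mult_right
          hbi i1 i2 cov g_sq g_int f_var_real m2 g_var_real g_mean integrable_const)
       (simp_all add: prob_space)
  show "integrable Z (\<lambda>z. (f z - al * g z - c)^2)"
    unfolding e using h by (rule integrable.intros)
  show "(\<integral>z. (f z - al * g z - c)^2 \<partial>Z) = sf2 - al^2 + (mu - c)^2"
    unfolding e using h[THEN has_bochner_integral_integral_eq] by (simp add: power2_eq_square)
qed

lemma inner:
  assumes z: "z \<in> space Z"
  shows "(\<integral>\<^sup>+y. ennreal ((y - (al * g z + c))^2) \<partial>K z) = ennvar (K z) (\<lambda>y. y) + ennreal ((f z - al * g z - c)^2)"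
proof -
  interpret prob_space "K z" by (rule Kp[OF z])
  have ym[measurable]: "(\<lambda>y. y) \<in> borel_measurable (K z)"
    unfolding measurable_cong_sets[OF sets_K[OF z] refl] by simp
  have yi: "integrable (K z) (\<lambda>y. y)"
    by (rule sq_int_imp_int[OF finite_measure ym K_sq[OF z]])
  have ym2: "(\<integral>y. y \<partial>K z) = f z" by (simp add: human_metric_def)
  define k where "k = al * g z + c"
  have sqk: "integrable (K z) (\<lambda>y. (y + d)^2)" for d
    by (rule sq_int_add) (auto simp: K_sq[OF z] ym)
  have v: "ennvar (K z) (\<lambda>y. y) = ennreal (\<integral>y. (y - f z)^2 \<partial>K z)"
    using ennvar_eq[OF Kp[OF z] ym K_sq[OF z]] by (simp add: ym2)
  have "(\<integral>\<^sup>+y. ennreal ((y - k)^2) \<partial>K z) = ennreal (\<integral>y. (y - k)^2 \<partial>K z)"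
    using sqk[of "-k"] by (intro nn_integral_eq_integral) auto
  also have "(\<integral>y. (y - k)^2 \<partial>K z) = (\<integral>y. (y - f z)^2 + (2 * (f z - k)) * (y - f z) + (f z - k)^2 \<partial>K z)"
    by (rule Bochner_Integration.integral_cong) (auto simp: power2_eq_square algebra_simps)
  also have "\<dots> = (\<integral>y. (y - f z)^2 \<partial>K z) + (f z - k)^2"
    using sqk[of "- f z"] yi ym2 by (simp add: prob_space)
  moreover have "(f z - k)^2 = (f z - al * g z - c)^2" by (simp add: k_def algebra_simps)
  ultimately show ?thesis unfolding v k_def[symmetric]
    by (simp add: ennreal_plus[symmetric] del: ennreal_plus)
qed

lemma kk_meas[measurable]: "(\<lambda>z. distr (K z) (Z \<Otimes>\<^sub>M borel) (Pair z)) \<in> measurable Z (subprob_algebra (Z \<Otimes>\<^sub>M borel))"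
  by (rule measurable_distr2[where f=Pair and M=borel]) (simp_all add: measurable_ident)

lemma Pair_meas: "z \<in> space Z \<Longrightarrow> Pair z \<in> measurable (K z) (Z \<Otimes>\<^sub>M borel)"
  unfolding measurable_cong_sets[OF sets_K refl] by (rule measurable_Pair1')

lemma J_prob: "prob_space (joint_law D)"
  unfolding joint_law_def
  by (rule prob_space.prob_space_bind[OF Zp _ kk_meas])
     (auto intro!: AE_I2 prob_space.prob_space_distr Kp Pair_meas)

lemma sets_J[measurable_cong]: "sets (joint_law D) = sets (Z \<Otimes>\<^sub>M borel)"
  unfolding joint_law_def
  by (rule sets_bind) (auto simp: prob_space.not_empty[OF Zp])

lemma J_nn:
  assumes [measurable]: "F \<in> borel_measurable (Z \<Otimes>\<^sub>M borel)"
  shows "(\<integral>\<^sup>+x. F x \<partial>joint_law D) = (\<integral>\<^sup>+z. \<integral>\<^sup>+y. F (z, y) \<partial>K z \<partial>Z)"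
  unfolding joint_law_def
  apply (subst nn_integral_bind[OF _ kk_meas])
   apply simp
  apply (intro nn_integral_cong)
  apply (subst nn_integral_distr[OF Pair_meas])
    apply auto
  done

lemma ev_meas[measurable]: "(\<lambda>z. ennvar (K z) (\<lambda>y. y)) \<in> borel_measurable Z"
proof -
  have "(\<lambda>z. \<integral>\<^sup>+y. ennreal ((y - f z)^2) \<partial>K z) \<in> borel_measurable Z"
    by (rule nn_integral_measurable_subprob_algebra2[where N=borel]) auto
  then show ?thesis unfolding ennvar_def human_metric_def .
qed

lemma Phi_meas[measurable]: "(\<lambda>x. snd x - al * g (fst x)) \<in> borel_measurable (joint_law D)"
  unfolding measurable_cong_sets[OF sets_J refl] by measurable

lemma Qc: "(\<integral>\<^sup>+x. ennreal ((snd x - al * g (fst x) - c)^2) \<partial>joint_law D)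
   = ennreal (sa2 + (sf2 - al^2 + (mu - c)^2))"
proof -
  have "(\<integral>\<^sup>+x. ennreal ((snd x - al * g (fst x) - c)^2) \<partial>joint_law D)
      = (\<integral>\<^sup>+z. \<integral>\<^sup>+y. ennreal ((y - (al * g z + c))^2) \<partial>K z \<partial>Z)"
    by (subst J_nn) (auto simp: diff_diff_eq)
  also have "\<dots> = (\<integral>\<^sup>+z. ennvar (K z) (\<lambda>y. y) + ennreal ((f z - al * g z - c)^2) \<partial>Z)"
    by (intro nn_integral_cong inner) auto
  also have "\<dots> = (\<integral>\<^sup>+z. ennvar (K z) (\<lambda>y. y) \<partial>Z) + (\<integral>\<^sup>+z. ennreal ((f z - al * g z - c)^2) \<partial>Z)"
    by (rule nn_integral_add) auto
  also have "(\<integral>\<^sup>+z. ennvar (K z) (\<lambda>y. y) \<partial>Z) + (\<integral>\<^sup>+z. ennreal ((f z - al * g z - c)^2) \<partial>Z)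
      = ennreal sa2 + ennreal (sf2 - al^2 + (mu - c)^2)"
    using outer EV by (subst nn_integral_eq_integral) auto
  also have "ennreal sa2 + ennreal (sf2 - al^2 + (mu - c)^2) = ennreal (sa2 + (sf2 - al^2 + (mu - c)^2))"
  proof -
    have "0 \<le> (\<integral>z. (f z - al * g z - c)^2 \<partial>Z)" by simp
    then have "0 \<le> sf2 - al^2 + (mu - c)^2" using outer(2) by simp
    then show ?thesis using sa2_nn by (simp add: ennreal_plus)
  qed
  finally show ?thesis .
qed

abbreviation "W \<equiv> sa2 + (sf2 - al^2)"

lemma Phi_facts:
  "integrable (joint_law D) (\<lambda>x. (snd x - al * g (fst x))^2)"
  "(\<integral>x. snd x - al * g (fst x) \<partial>joint_law D) = mu"
  "(\<integral>x. (snd x - al * g (fst x) - mu)^2 \<partial>joint_law D) = W"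
proof -
  interpret J: prob_space "joint_law D" by (rule J_prob)
  let ?P = "\<lambda>x. snd x - al * g (fst x)"
  have Wn: "0 \<le> W + (mu - c)^2" for c
  proof -
    have "0 \<le> (\<integral>z. (f z - al * g z - c)^2 \<partial>Z)" by simp
    then show ?thesis using outer(2)[of c] sa2_nn by simp
  qed
  have sq: "integrable (joint_law D) (\<lambda>x. (?P x - c)^2)" for c
    using Qc[of c]
    by (intro integrableI_nn_integral_finite[where x="W + (mu - c)^2"]) (auto simp: add.assoc)
  show "integrable (joint_law D) (\<lambda>x. (?P x)^2)" using sq[of 0] by simp
  have r: "(\<integral>x. (?P x - c)^2 \<partial>joint_law D) = W + (mu - c)^2" for c
  proof -
    have "ennreal (\<integral>x. (?P x - c)^2 \<partial>joint_law D) = ennreal (W + (mu - c)^2)"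
      using Qc[of c] sq[of c] by (subst nn_integral_eq_integral[symmetric]) (auto simp: add.assoc)
    then show ?thesis using Wn[of c] by (subst (asm) ennreal_inj) auto
  qed
  have Pi: "integrable (joint_law D) ?P"
    by (rule sq_int_imp_int[OF J.finite_measure Phi_meas]) (use sq[of 0] in simp)
  have ex: "(\<integral>x. (?P x - c)^2 \<partial>joint_law D) = (\<integral>x. (?P x)^2 \<partial>joint_law D) - 2 * c * (\<integral>x. ?P x \<partial>joint_law D) + c^2" for c
  proof -
    have "(\<integral>x. (?P x - c)^2 \<partial>joint_law D) = (\<integral>x. (?P x)^2 - (2 * c) * ?P x + c^2 \<partial>joint_law D)"
      by (rule Bochner_Integration.integral_cong) (auto simp: power2_eq_square algebra_simps)
    also have "\<dots> = (\<integral>x. (?P x)^2 \<partial>joint_law D) - 2 * c * (\<integral>x. ?P x \<partial>joint_law D) + c^2"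
      using sq[of 0] Pi by (simp add: J.prob_space)
    finally show ?thesis .
  qed
  have "(\<integral>x. ?P x \<partial>joint_law D) = mu"
    using r[of 0] r[of 1] ex[of 0] ex[of 1] by (simp add: power2_eq_square algebra_simps)
  then show "(\<integral>x. ?P x \<partial>joint_law D) = mu" .
  show "(\<integral>x. (?P x - mu)^2 \<partial>joint_law D) = W" using r[of mu] by simp
qed

lemma part_i: "n \<ge> 1 \<Longrightarrow> ennvar (sample_space n D) (cv_est n al D) = ennreal (W / real n)"
proof -
  assume n: "n \<ge> 1"
  have cv: "cv_est n al D = (\<lambda>\<omega>. (\<Sum>i<n. (\<lambda>x. snd x - al * g (fst x)) (\<omega> i)) / real n)"
    by (simp add: cv_est_def fun_eq_iff)
  show ?thesis unfolding cv sample_space_def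
    by (rule iid_var[OF J_prob Phi_meas Phi_facts(1) Phi_facts(2) Phi_facts(3) n])
qed

end

definition gN :: "real \<Rightarrow> real measure" where
  "gN a = density lborel (\<lambda>x. ennreal (normal_density a 1 x))"

lemma gN_prob: "prob_space (gN a)"
  unfolding gN_def by (rule prob_space_normal_density) simp

lemma sets_gN[measurable_cong, simp]: "sets (gN a) = sets borel"
  by (simp add: gN_def)

lemma space_gN[simp]: "space (gN a) = UNIV"
  by (simp add: gN_def)

lemma gN_measure_UNIV[simp]: "measure (gN a) UNIV = 1"
  using prob_space.prob_space[OF gN_prob, of a] by simp

lemma gN_integrable_iff:
  fixes f :: "real \<Rightarrow> real"
  assumes [measurable]: "f \<in> borel_measurable borel"
  shows "integrable (gN a) f \<longleftrightarrow> integrable lborel (\<lambda>x. normal_density a 1 x * f x)"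
  unfolding gN_def by (subst integrable_density) auto

lemma gN_integral:
  fixes f :: "real \<Rightarrow> real"
  assumes [measurable]: "f \<in> borel_measurable borel"
  shows "integral\<^sup>L (gN a) f = (\<integral>x. normal_density a 1 x * f x \<partial>lborel)"
  unfolding gN_def by (subst integral_density) auto

lemma gN_int_pow: "integrable (gN a) (\<lambda>x. (x - a) ^ k)"
  by (subst gN_integrable_iff) (auto intro: integrable_normal_moment)

lemma gN_int_id: "integrable (gN a) (\<lambda>x. x)"
proof -
  have "integrable (gN a) (\<lambda>x. (x - a) ^ 1 + a)"
    using gN_int_pow[of a 1] finite_measure.integrable_const[OF prob_space.finite_measure[OF gN_prob]]
    by (intro Bochner_Integration.integrable_add) auto
  then show ?thesis by simp
qed

lemma gN_int_sq: "integrable (gN a) (\<lambda>x. x ^ 2)"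
proof -
  have "integrable (gN a) (\<lambda>x. ((x - a) + a) ^ 2)"
    by (rule sq_int_add) (use gN_int_pow[of a 2] in \<open>auto intro: sq_int_const prob_space.finite_measure gN_prob\<close>)
  then show ?thesis by simp
qed

lemma gN_mean: "(\<integral>x. x \<partial>gN a) = a"
  by (subst gN_integral) (auto simp: integral_normal_moment_nz_1)

lemma gN_var: "(\<integral>x. (x - a) ^ 2 \<partial>gN a) = 1"
  using integral_normal_moment_even[of 1 a 1]
  by (subst gN_integral) auto

lemma normal_shift:
  "normal_density 0 1 x * exp (a * x - a^2 / 2) = normal_density a 1 x"
proof -
  have e: "- ((x - a)^2) / (2 * 1^2) = - ((x - 0)^2) / (2 * 1^2) + (a * x - a^2 / 2)"
    by (simp add: power2_eq_square field_simps)
  show ?thesis unfolding normal_density_def e exp_add by simp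
qed

lemma normal_shift2:
  "normal_density 0 1 x * (exp (a * x - a^2 / 2))^2 = exp (a^2) * normal_density (2 * a) 1 x"
proof -
  have e: "- ((x - 0)^2) / (2 * 1^2) + 2 * (a * x - a^2 / 2) = a^2 + - ((x - 2 * a)^2) / (2 * 1^2)"
    by (simp add: power2_eq_square field_simps)
  have "(exp (a * x - a^2 / 2))^2 = exp (2 * (a * x - a^2 / 2))"
    by (simp add: power2_eq_square flip: exp_add)
  then have "normal_density 0 1 x * (exp (a * x - a^2 / 2))^2
      = 1 / sqrt (2 * pi * 1\<^sup>2) * exp (- ((x - 0)^2) / (2 * 1^2) + 2 * (a * x - a^2 / 2))"
    unfolding normal_density_def exp_add by simp
  also have "\<dots> = exp (a^2) * normal_density (2 * a) 1 x"
    unfolding e exp_add normal_density_def by simp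
  finally show ?thesis .
qed

lemma gN_density: "gN a = density (gN 0) (\<lambda>x. ennreal (exp (a * x - a^2 / 2)))"
  unfolding gN_def
proof -
  have "density lborel (\<lambda>x. ennreal (normal_density a 1 x))
      = density lborel (\<lambda>x. ennreal (normal_density 0 1 x) * ennreal (exp (a * x - a^2 / 2)))"
    by (intro arg_cong[where f="density lborel"] ext) (simp add: normal_shift flip: ennreal_mult)
  then show "density lborel (\<lambda>x. ennreal (normal_density a 1 x)) =
    density (density lborel (\<lambda>x. ennreal (normal_density 0 1 x))) (\<lambda>x. ennreal (exp (a * x - a\<^sup>2 / 2)))"
    by (subst density_density_eq) auto
qed

lemma nn_integral_normal: "(\<integral>\<^sup>+x. ennreal (normal_density a 1 x) \<partial>lborel) = 1"
proof -
  interpret prob_space "gN a" by (rule gN_prob)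
  have "emeasure (gN a) UNIV = 1" using emeasure_space_1 by simp
  then show ?thesis unfolding gN_def by (simp add: emeasure_density)
qed

lemma gN_chi2: "(\<integral>\<^sup>+x. ennreal ((exp (a * x - a^2 / 2))^2) \<partial>gN 0) = ennreal (exp (a^2))"
proof -
  have "(\<integral>\<^sup>+x. ennreal ((exp (a * x - a^2 / 2))^2) \<partial>gN 0)
      = (\<integral>\<^sup>+x. ennreal (normal_density 0 1 x) * ennreal ((exp (a * x - a^2 / 2))^2) \<partial>lborel)"
    unfolding gN_def by (subst nn_integral_density) auto
  also have "\<dots> = (\<integral>\<^sup>+x. ennreal (exp (a^2)) * ennreal (normal_density (2 * a) 1 x) \<partial>lborel)"
    by (intro nn_integral_cong) (simp add: normal_shift2 flip: ennreal_mult)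
  also have "\<dots> = ennreal (exp (a^2))"
    by (subst nn_integral_cmult) (auto simp: nn_integral_normal)
  finally show ?thesis .
qed

lemma pair_int_mult:
  fixes f g :: "_ \<Rightarrow> real"
  assumes "prob_space M" "prob_space N"
    and [measurable]: "f \<in> borel_measurable M" "g \<in> borel_measurable N"
    and fi: "integrable M f" and gi: "integrable N g"
  shows "integrable (M \<Otimes>\<^sub>M N) (\<lambda>x. f (fst x) * g (snd x))"
    and "(\<integral>x. f (fst x) * g (snd x) \<partial>(M \<Otimes>\<^sub>M N)) = (\<integral>x. f x \<partial>M) * (\<integral>y. g y \<partial>N)"
proof -
  interpret M: prob_space M by fact
  interpret N: prob_space N by fact
  interpret P: pair_prob_space M N proof qed
  show I: "integrable (M \<Otimes>\<^sub>M N) (\<lambda>x. f (fst x) * g (snd x))"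
  proof (rule P.Fubini_integrable)
    show "integrable M (\<lambda>x. \<integral>y. norm (f (fst (x, y)) * g (snd (x, y))) \<partial>N)"
      using fi by (simp add: abs_mult)
    show "AE x in M. integrable N (\<lambda>y. f (fst (x, y)) * g (snd (x, y)))"
      using gi by simp
  qed measurable
  have "(\<integral>x. f (fst x) * g (snd x) \<partial>(M \<Otimes>\<^sub>M N)) = (\<integral>x. \<integral>y. f (fst (x,y)) * g (snd (x,y)) \<partial>N \<partial>M)"
    using P.integral_fst'[OF I] by simp
  also have "\<dots> = (\<integral>x. f x * (\<integral>y. g y \<partial>N) \<partial>M)" by simp
  also have "\<dots> = (\<integral>x. f x \<partial>M) * (\<integral>y. g y \<partial>N)" by simp
  finally show "(\<integral>x. f (fst x) * g (snd x) \<partial>(M \<Otimes>\<^sub>M N)) = (\<integral>x. f x \<partial>M) * (\<integral>y. g y \<partial>N)" .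
qed

lemma pair_int_fst:
  fixes f :: "_ \<Rightarrow> real"
  assumes "prob_space M" "prob_space N"
    and [measurable]: "f \<in> borel_measurable M" and fi: "integrable M f"
  shows "integrable (M \<Otimes>\<^sub>M N) (\<lambda>x. f (fst x))"
    and "(\<integral>x. f (fst x) \<partial>(M \<Otimes>\<^sub>M N)) = (\<integral>x. f x \<partial>M)"
proof -
  interpret N: prob_space N by fact
  show "integrable (M \<Otimes>\<^sub>M N) (\<lambda>x. f (fst x))"
    using pair_int_mult(1)[OF assms(1,2,3), of "\<lambda>_. 1"] fi by (auto simp: N.prob_space)
  show "(\<integral>x. f (fst x) \<partial>(M \<Otimes>\<^sub>M N)) = (\<integral>x. f x \<partial>M)"
    using pair_int_mult(2)[OF assms(1,2,3), of "\<lambda>_. 1"] fi by (auto simp: N.prob_space)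
qed

lemma pair_int_snd:
  fixes g :: "_ \<Rightarrow> real"
  assumes "prob_space M" "prob_space N"
    and [measurable]: "g \<in> borel_measurable N" and gi: "integrable N g"
  shows "integrable (M \<Otimes>\<^sub>M N) (\<lambda>x. g (snd x))"
    and "(\<integral>x. g (snd x) \<partial>(M \<Otimes>\<^sub>M N)) = (\<integral>x. g x \<partial>N)"
proof -
  interpret M: prob_space M by fact
  show "integrable (M \<Otimes>\<^sub>M N) (\<lambda>x. g (snd x))"
    using pair_int_mult(1)[OF assms(1,2), of "\<lambda>_. 1" g] gi by (auto simp: M.prob_space)
  show "(\<integral>x. g (snd x) \<partial>(M \<Otimes>\<^sub>M N)) = (\<integral>x. g x \<partial>N)"
    using pair_int_mult(2)[OF assms(1,2), of "\<lambda>_. 1" g] gi by (auto simp: M.prob_space)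
qed

definition RR :: "bool measure" where "RR = measure_pmf (bernoulli_pmf (1/2))"

lemma RR_prob: "prob_space RR" unfolding RR_def by (rule prob_space_measure_pmf)
lemma sets_RR[simp, measurable_cong]: "sets RR = UNIV" unfolding RR_def by simp
lemma space_RR[simp]: "space RR = UNIV" unfolding RR_def by simp

definition sg :: "bool \<Rightarrow> real" where "sg s = (if s then 1 else -1)"
definition enc :: "bool \<times> real \<Rightarrow> real" where "enc x = (if fst x then exp (snd x) else - exp (snd x))"
definition Gf :: "real \<Rightarrow> real" where "Gf z = (if 0 < z then 1 else -1)"
definition Wf :: "real \<Rightarrow> real" where "Wf z = ln \<bar>z\<bar>"

lemma Gf_enc[simp]: "Gf (enc x) = sg (fst x)" by (simp add: Gf_def enc_def sg_def)
lemma Wf_enc[simp]: "Wf (enc x) = snd x" by (simp add: Wf_def enc_def)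
lemma sg_sq[simp]: "sg s ^ 2 = 1" by (simp add: sg_def)
lemma Gf_sq[simp]: "Gf z ^ 2 = 1" by (simp add: Gf_def)
lemma Gf_meas[measurable]: "Gf \<in> borel_measurable borel" unfolding Gf_def by measurable
lemma Wf_meas[measurable]: "Wf \<in> borel_measurable borel" unfolding Wf_def by measurable
lemma sg_meas[measurable]: "sg \<in> borel_measurable (count_space UNIV)" by simp

lemma RR_meas[measurable]: "(f :: bool \<Rightarrow> real) \<in> borel_measurable RR"
proof -
  have eq: "sets RR = sets (count_space UNIV)" by simp
  show ?thesis unfolding measurable_cong_sets[OF eq refl] by simp
qed

lemma RR_sg: "(\<integral>s. sg s \<partial>RR) = 0" unfolding RR_def by (simp add: sg_def)
lemma RR_int: "integrable RR (f :: bool \<Rightarrow> real)"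
  unfolding RR_def by (rule integrable_measure_pmf_finite) simp

lemma enc_meas[measurable]: "enc \<in> measurable (RR \<Otimes>\<^sub>M gN a) borel"
proof -
  have 1: "enc \<in> measurable (count_space UNIV \<Otimes>\<^sub>M borel) borel"
  proof (rule measurable_pair_measure_countable1)
    fix x :: bool show "(\<lambda>y. enc (x, y)) \<in> borel_measurable borel"
      by (cases x) (simp_all add: enc_def)
  qed simp
  have eq: "sets (RR \<Otimes>\<^sub>M gN a) = sets (count_space UNIV \<Otimes>\<^sub>M borel)"
    by (intro sets_pair_measure_cong) auto
  show ?thesis using 1 unfolding measurable_cong_sets[OF eq refl] .
qed

definition QQ :: "real \<Rightarrow> (bool \<times> real) measure" where "QQ a = RR \<Otimes>\<^sub>M gN a"
definition Zl :: "real \<Rightarrow> real measure" where "Zl a = distr (QQ a) borel enc"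
definition Fz :: "real \<Rightarrow> real \<Rightarrow> real \<Rightarrow> real" where "Fz al c z = al * Gf z + c * Wf z"
definition Yl :: "real \<Rightarrow> real \<Rightarrow> real \<Rightarrow> real \<Rightarrow> real \<Rightarrow> real measure" where
  "Yl al c v b z = distr (gN b) borel (\<lambda>e. Fz al c z + sqrt v * e)"
definition Dfam :: "real \<Rightarrow> real \<Rightarrow> real \<Rightarrow> real \<Rightarrow> real \<Rightarrow> real hdist" where
  "Dfam al c v a b = \<lparr>zlaw = Zl a, gmet = Gf, ylaw = Yl al c v b\<rparr>"

lemma Fz_meas[measurable]: "Fz al c \<in> borel_measurable borel" unfolding Fz_def by measurable
lemma Fz_enc[simp]: "Fz al c (enc x) = al * sg (fst x) + c * snd x" by (simp add: Fz_def)

lemma QQ_prob: "prob_space (QQ a)" unfolding QQ_def by (intro prob_space_pair RR_prob gN_prob)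
lemma sets_QQ[measurable_cong]: "sets (QQ a) = sets (count_space UNIV \<Otimes>\<^sub>M borel)"
  unfolding QQ_def by (intro sets_pair_measure_cong) auto
lemma enc_meas'[measurable]: "enc \<in> measurable (QQ a) borel"
  using enc_meas unfolding QQ_def .
lemma Zl_prob: "prob_space (Zl a)" unfolding Zl_def by (intro prob_space.prob_space_distr QQ_prob enc_meas')
lemma sets_Zl[measurable_cong, simp]: "sets (Zl a) = sets borel" by (simp add: Zl_def)
lemma space_Zl[simp]: "space (Zl a) = UNIV" by (simp add: Zl_def)

lemma Zl_integral:
  fixes f :: "real \<Rightarrow> real"
  assumes [measurable]: "f \<in> borel_measurable borel"
  shows "integral\<^sup>L (Zl a) f = (\<integral>x. f (enc x) \<partial>QQ a)"
  unfolding Zl_def by (subst integral_distr) auto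

lemma Zl_integrable:
  fixes f :: "real \<Rightarrow> real"
  assumes [measurable]: "f \<in> borel_measurable borel"
  shows "integrable (Zl a) f \<longleftrightarrow> integrable (QQ a) (\<lambda>x. f (enc x))"
  unfolding Zl_def by (subst integrable_distr_eq) auto

lemma Zl_nn:
  assumes [measurable]: "f \<in> borel_measurable borel"
  shows "(\<integral>\<^sup>+x. f x \<partial>Zl a) = (\<integral>\<^sup>+x. f (enc x) \<partial>QQ a)"
  unfolding Zl_def by (subst nn_integral_distr) auto

lemma space_QQ[simp]: "space (QQ a) = UNIV"
  unfolding QQ_def by (simp add: space_pair_measure)
lemma QQ_measure_UNIV[simp]: "measure (QQ a) UNIV = 1"
  using prob_space.prob_space[OF QQ_prob, of a] by simp

lemma QQ_S: "integrable (QQ a) (\<lambda>x. sg (fst x))" "(\<integral>x. sg (fst x) \<partial>QQ a) = 0"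
  unfolding QQ_def using pair_int_fst[OF RR_prob gN_prob RR_meas RR_int]
  by (auto simp: RR_sg)

lemma gN_int_c: "integrable (gN a) (\<lambda>x. x - a)"
  using gN_int_pow[of a 1] by simp

lemma gN_mean_c: "(\<integral>x. x - a \<partial>gN a) = 0"
proof -
  interpret prob_space "gN a" by (rule gN_prob)
  show ?thesis using gN_int_id gN_mean by simp
qed

lemma QQ_W: "integrable (QQ a) (\<lambda>x. snd x - a)" "(\<integral>x. snd x - a \<partial>QQ a) = 0"
  unfolding QQ_def using pair_int_snd[OF RR_prob gN_prob _ gN_int_c]
  by (auto simp: gN_mean_c)

lemma QQ_W2: "integrable (QQ a) (\<lambda>x. (snd x - a)^2)" "(\<integral>x. (snd x - a)^2 \<partial>QQ a) = 1"
  unfolding QQ_def using pair_int_snd[OF RR_prob gN_prob _ gN_int_pow[of a 2]]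
  by (auto simp: gN_var)

lemma QQ_SW: "integrable (QQ a) (\<lambda>x. sg (fst x) * (snd x - a))" "(\<integral>x. sg (fst x) * (snd x - a) \<partial>QQ a) = 0"
  unfolding QQ_def using pair_int_mult[OF RR_prob gN_prob RR_meas _ RR_int gN_int_c]
  by (auto simp: gN_mean_c)

lemma QQ_const: "integrable (QQ a) (\<lambda>x. k::real)" "(\<integral>x. k \<partial>QQ a) = k"
  using finite_measure.integrable_const[OF prob_space.finite_measure[OF QQ_prob]] apply blast
  by (simp add: lebesgue_integral_const)

lemma Dfam_simps[simp]: "zlaw (Dfam al c v a b) = Zl a" "gmet (Dfam al c v a b) = Gf"
  "ylaw (Dfam al c v a b) = Yl al c v b"
  by (simp_all add: Dfam_def)

lemma Yl_prob: "prob_space (Yl al c v b z)"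
  unfolding Yl_def by (intro prob_space.prob_space_distr gN_prob) simp

lemma sets_Yl[measurable_cong, simp]: "sets (Yl al c v b z) = sets borel"
  by (simp add: Yl_def)

lemma gN_const: "integrable (gN b) (\<lambda>x. k::real)" "(\<integral>x. k \<partial>gN b) = k"
  using finite_measure.integrable_const[OF prob_space.finite_measure[OF gN_prob]] apply blast
  by (simp add: lebesgue_integral_const)

lemma hm_Dfam: "human_metric (Dfam al c v a b) z = Fz al c z + sqrt v * b"
proof -
  have "human_metric (Dfam al c v a b) z = (\<integral>e. Fz al c z + sqrt v * e \<partial>gN b)"
    unfolding human_metric_def by (simp add: Yl_def integral_distr)
  also have "\<dots> = Fz al c z + sqrt v * b"
    using gN_int_id gN_mean gN_const by simp
  finally show ?thesis .
qed

lemma hm_enc: "human_metric (Dfam al c v a b) (enc x) = al * sg (fst x) + c * (snd x - a) + (c * a + sqrt v * b)"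
  by (simp add: hm_Dfam algebra_simps)

lemma hm_meas[measurable]: "human_metric (Dfam al c v a b) \<in> borel_measurable borel"
  unfolding hm_Dfam[abs_def] by measurable

lemma target_Dfam: "target (Dfam al c v a b) = c * a + sqrt v * b"
proof -
  have "target (Dfam al c v a b) = (\<integral>x. al * sg (fst x) + c * (snd x - a) + (c * a + sqrt v * b) \<partial>QQ a)"
    unfolding target_def by (simp add: Zl_integral hm_enc)
  also have "\<dots> = c * a + sqrt v * b"
    using QQ_S QQ_W QQ_const by simp
  finally show ?thesis .
qed

lemma Gf_int: "integrable (Zl a) Gf" "(\<integral>z. Gf z \<partial>Zl a) = 0"
  by (simp_all add: Zl_integrable Zl_integral QQ_S)

lemma ennvar_Gf: "ennvar (Zl a) Gf = 1"
proof -
  interpret prob_space "Zl a" by (rule Zl_prob)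
  show ?thesis unfolding ennvar_def Gf_int(2)
    using emeasure_space_1 by simp
qed

lemma hm_sq_int: "integrable (Zl a) (\<lambda>z. (human_metric (Dfam al c v a b) z)^2)"
proof -
  have "integrable (QQ a) (\<lambda>x. (al * sg (fst x) + (c * (snd x - a) + (c * a + sqrt v * b)))^2)"
    by (intro sq_int_add sq_int_cmult sq_int_const QQ_W2 prob_space.finite_measure QQ_prob)
       (auto intro: QQ_const)
  then show ?thesis by (simp add: Zl_integrable hm_enc add.assoc)
qed

lemma ennvar_hm: "ennvar (Zl a) (human_metric (Dfam al c v a b)) = ennreal (al^2 + c^2)"
proof -
  have "ennvar (Zl a) (human_metric (Dfam al c v a b))
      = ennreal (\<integral>z. (human_metric (Dfam al c v a b) z - target (Dfam al c v a b))^2 \<partial>Zl a)"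
    by (subst ennvar_eq[OF Zl_prob _ hm_sq_int]) (simp_all add: target_def)
  also have "(\<integral>z. (human_metric (Dfam al c v a b) z - target (Dfam al c v a b))^2 \<partial>Zl a)
      = (\<integral>x. al^2 + (2 * al * c) * (sg (fst x) * (snd x - a)) + c^2 * (snd x - a)^2 \<partial>QQ a)"
  proof -
    have e: "(human_metric (Dfam al c v a b) (enc x) - target (Dfam al c v a b))^2
        = al^2 + (2 * al * c) * (sg (fst x) * (snd x - a)) + c^2 * (snd x - a)^2" for x
    proof -
      have "(human_metric (Dfam al c v a b) (enc x) - target (Dfam al c v a b))^2
          = (al * sg (fst x) + c * (snd x - a))^2" by (simp add: hm_enc target_Dfam)
      also have "\<dots> = al^2 * (sg (fst x))^2 + (2 * al * c) * (sg (fst x) * (snd x - a)) + c^2 * (snd x - a)^2"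
        by (simp add: power2_eq_square algebra_simps)
      finally show ?thesis by simp
    qed
    show ?thesis by (simp add: Zl_integral e)
  qed
  also have "\<dots> = al^2 + c^2"
    using QQ_SW QQ_W2 QQ_const by simp
  finally show ?thesis .
qed

lemma cov_Dfam:
  "integrable (Zl a) (\<lambda>z. (human_metric (Dfam al c v a b) z - target (Dfam al c v a b)) * (Gf z - (\<integral>x. Gf x \<partial>Zl a)))"
  "(\<integral>z. (human_metric (Dfam al c v a b) z - target (Dfam al c v a b)) * (Gf z - (\<integral>x. Gf x \<partial>Zl a)) \<partial>Zl a) = al"
proof -
  have e: "(human_metric (Dfam al c v a b) (enc x) - target (Dfam al c v a b)) * (Gf (enc x) - (\<integral>x. Gf x \<partial>Zl a))
     = al + c * (sg (fst x) * (snd x - a))" for x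
    by (simp add: hm_enc target_Dfam Gf_int algebra_simps power2_eq_square[symmetric])
  have i1: "integrable (QQ a) (\<lambda>x. al + c * (sg (fst x) * (snd x - a)))" by (simp add: QQ_SW QQ_const)
  have i2: "integrable (QQ a) (\<lambda>x. (human_metric (Dfam al c v a b) (enc x) - target (Dfam al c v a b)) * (Gf (enc x) - (\<integral>x. Gf x \<partial>Zl a)))"
    using i1 by (subst Bochner_Integration.integrable_cong[OF refl]) (simp_all only: e)
  show "integrable (Zl a) (\<lambda>z. (human_metric (Dfam al c v a b) z - target (Dfam al c v a b)) * (Gf z - (\<integral>x. Gf x \<partial>Zl a)))"
    using i2 by (subst Zl_integrable) auto
  have "(\<integral>z. (human_metric (Dfam al c v a b) z - target (Dfam al c v a b)) * (Gf z - (\<integral>x. Gf x \<partial>Zl a)) \<partial>Zl a)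
     = (\<integral>x. (human_metric (Dfam al c v a b) (enc x) - target (Dfam al c v a b)) * (Gf (enc x) - (\<integral>x. Gf x \<partial>Zl a)) \<partial>QQ a)"
    by (subst Zl_integral) auto
  also have "\<dots> = (\<integral>x. al + c * (sg (fst x) * (snd x - a)) \<partial>QQ a)"
    by (rule Bochner_Integration.integral_cong[OF refl]) (simp only: e)
  also have "\<dots> = al" by (simp add: QQ_SW QQ_const)
  finally show "(\<integral>z. (human_metric (Dfam al c v a b) z - target (Dfam al c v a b)) * (Gf z - (\<integral>x. Gf x \<partial>Zl a)) \<partial>Zl a) = al" .
qed

lemma Yl_sq_int: "integrable (Yl al c v b z) (\<lambda>y. y^2)"
proof -
  have "integrable (gN b) (\<lambda>e. (sqrt v * e + Fz al c z)^2)"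
    by (intro sq_int_add sq_int_cmult gN_int_sq sq_int_const prob_space.finite_measure gN_prob) auto
  then show ?thesis unfolding Yl_def by (subst integrable_distr_eq) (auto simp: add.commute)
qed

lemma ennvar_Yl: "v \<ge> 0 \<Longrightarrow> ennvar (Yl al c v b z) (\<lambda>y. y) = ennreal v"
proof -
  assume v: "v \<ge> 0"
  have m: "(\<integral>y. y \<partial>Yl al c v b z) = Fz al c z + sqrt v * b"
    using hm_Dfam[of al c v 0 b z] unfolding human_metric_def by simp
  have "ennvar (Yl al c v b z) (\<lambda>y. y) = ennreal (\<integral>y. (y - (Fz al c z + sqrt v * b))^2 \<partial>Yl al c v b z)"
    by (subst ennvar_eq[OF Yl_prob _ Yl_sq_int]) (simp_all add: m)
  also have "(\<integral>y. (y - (Fz al c z + sqrt v * b))^2 \<partial>Yl al c v b z) = (\<integral>e. v * (e - b)^2 \<partial>gN b)"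
    unfolding Yl_def using v by (subst integral_distr) (auto simp: power2_eq_square algebra_simps)
  also have "\<dots> = v" using gN_var by simp
  finally show ?thesis .
qed

lemma Yl_meas: "Yl al c v b \<in> measurable (Zl a) (subprob_algebra borel)"
proof -
  have "(\<lambda>z. distr (gN b) borel (\<lambda>e. Fz al c z + sqrt v * e)) \<in> measurable (Zl a) (subprob_algebra borel)"
  proof (rule measurable_distr2)
    show "(\<lambda>(z, e). Fz al c z + sqrt v * e) \<in> borel_measurable (Zl a \<Otimes>\<^sub>M gN b)" by measurable
    show "(\<lambda>z. gN b) \<in> measurable (Zl a) (subprob_algebra (gN b))"
      by (rule measurable_const) (auto simp: space_subprob_algebra prob_space_imp_subprob_space gN_prob)
  qed
  then show ?thesis unfolding Yl_def[abs_def] .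
qed

lemma Dfam_class:
  assumes "v \<ge> 0" "c \<ge> 0"
  shows "in_class (al^2 + c^2) v al (Dfam al c v a b)"
proof -
  have vd: "valid_dist (Dfam al c v a b)"
    unfolding valid_dist_def
    using Zl_prob Yl_meas Yl_prob Yl_sq_int Gf_int ennvar_Gf by auto
  have ev: "(\<integral>\<^sup>+ z. ennvar (ylaw (Dfam al c v a b) z) (\<lambda>y. y) \<partial>zlaw (Dfam al c v a b)) = ennreal v"
  proof -
    interpret prob_space "Zl a" by (rule Zl_prob)
    show ?thesis using assms emeasure_space_1 by (simp add: ennvar_Yl)
  qed
  show ?thesis unfolding in_class_def
    using vd ev ennvar_hm cov_Dfam by simp
qed

lemma indicator_PiE_prod:
  assumes "x \<in> extensional I" "finite I"
  shows "(indicator (Pi\<^sub>E I A) x :: ennreal) = (\<Prod>i\<in>I. indicator (A i) (x i))"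
proof (cases "x \<in> Pi\<^sub>E I A")
  case True
  then show ?thesis by (auto simp: indicator_def PiE_iff intro!: prod.neutral[symmetric])
next
  case False
  with assms(1) obtain i where i: "i \<in> I" "x i \<notin> A i" by (auto simp: PiE_iff)
  have "(indicator (A i) (x i) :: ennreal) = 0" using i by simp
  then have "(\<Prod>i\<in>I. (indicator (A i) (x i) :: ennreal)) = 0"
    using assms(2) i by (intro prod_zero bexI[of _ i])
  with False show ?thesis by simp
qed

lemma PiM_density:
  fixes L :: "'i \<Rightarrow> 'a \<Rightarrow> ennreal"
  assumes fin: "finite I" and Mp: "\<And>i. prob_space (M i)"
    and Lm[measurable]: "\<And>i. L i \<in> borel_measurable (M i)"
    and Dp: "\<And>i. prob_space (density (M i) (L i))"
  shows "PiM I (\<lambda>i. density (M i) (L i)) = density (PiM I M) (\<lambda>x. \<Prod>i\<in>I. L i (x i))"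
proof -
  interpret PM: product_prob_space M by (rule product_prob_spaceI) (rule Mp)
  interpret PD: product_prob_space "\<lambda>i. density (M i) (L i)" by (rule product_prob_spaceI) (rule Dp)
  have sets_eq: "sets (PiM I (\<lambda>i. density (M i) (L i))) = sets (PiM I M)"
    by (intro sets_PiM_cong) auto
  show ?thesis
  proof (rule PD.PiM_eqI[symmetric, OF fin])
    show "sets (density (PiM I M) (\<lambda>x. \<Prod>i\<in>I. L i (x i))) = sets (PiM I (\<lambda>i. density (M i) (L i)))"
      using sets_eq by simp
    fix A assume A: "\<And>i. i \<in> I \<Longrightarrow> A i \<in> sets (density (M i) (L i))"
    then have A': "\<And>i. i \<in> I \<Longrightarrow> A i \<in> sets (M i)" by simp
    have PA: "Pi\<^sub>E I A \<in> sets (PiM I M)" using A' by (intro sets_PiM_I_finite fin) auto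
    have "emeasure (density (PiM I M) (\<lambda>x. \<Prod>i\<in>I. L i (x i))) (Pi\<^sub>E I A)
        = (\<integral>\<^sup>+x. (\<Prod>i\<in>I. L i (x i)) * indicator (Pi\<^sub>E I A) x \<partial>PiM I M)"
      using PA by (subst emeasure_density) (auto simp: mult.commute)
    also have "\<dots> = (\<integral>\<^sup>+x. (\<Prod>i\<in>I. L i (x i) * indicator (A i) (x i)) \<partial>PiM I M)"
      by (intro nn_integral_cong) (auto simp: space_PiM indicator_PiE_prod fin prod.distrib PiE_iff)
    also have "\<dots> = (\<Prod>i\<in>I. \<integral>\<^sup>+x. L i x * indicator (A i) x \<partial>M i)"
      using A' by (intro PM.product_nn_integral_prod fin) auto
    also have "\<dots> = (\<Prod>i\<in>I. emeasure (density (M i) (L i)) (A i))"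
      using A' by (intro prod.cong refl) (simp add: emeasure_density)
    finally show "emeasure (density (PiM I M) (\<lambda>x. \<Prod>i\<in>I. L i (x i))) (Pi\<^sub>E I A) = (\<Prod>i\<in>I. emeasure (density (M i) (L i)) (A i))" .
  qed
qed

lemma hcr:
  fixes Lr Y :: "'a \<Rightarrow> real"
  assumes Op: "prob_space \<Omega>" and [measurable]: "Lr \<in> borel_measurable \<Omega>" "Y \<in> borel_measurable \<Omega>"
    and Lsq: "integrable \<Omega> (\<lambda>x. (Lr x)^2)" and Lq: "(\<integral>x. (Lr x)^2 \<partial>\<Omega>) = q"
    and L1: "(\<integral>x. Lr x \<partial>\<Omega>) = 1"
    and Ysq: "integrable \<Omega> (\<lambda>x. (Y x)^2)" and Y0: "(\<integral>x. Y x \<partial>\<Omega>) = 0"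
    and LY: "(\<integral>x. Lr x * Y x \<partial>\<Omega>) = t"
  shows "t^2 \<le> (q - 1) * (\<integral>x. (Y x)^2 \<partial>\<Omega>)"
proof -
  interpret prob_space \<Omega> by fact
  have Li: "integrable \<Omega> Lr" by (rule sq_int_imp_int[OF finite_measure _ Lsq]) simp
  have Yi: "integrable \<Omega> Y" by (rule sq_int_imp_int[OF finite_measure _ Ysq]) simp
  have LYi: "integrable \<Omega> (\<lambda>x. Lr x * Y x)" by (rule sq_int_mult) (auto simp: Lsq Ysq)
  have L1sq: "integrable \<Omega> (\<lambda>x. (Lr x - 1)^2)"
    by (rule sq_int_add[where g="\<lambda>_. -1", simplified]) (auto simp: Lsq)
  have "t = (\<integral>x. (Lr x - 1) * Y x \<partial>\<Omega>)"
    using LYi Yi LY Y0 by (simp add: left_diff_distrib)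
  then have "t^2 \<le> (\<integral>x. (Lr x - 1)^2 \<partial>\<Omega>) * (\<integral>x. (Y x)^2 \<partial>\<Omega>)"
    using cauchy_schwarz_int[OF _ _ L1sq Ysq] by simp
  also have "(\<integral>x. (Lr x - 1)^2 \<partial>\<Omega>) = q - 1"
  proof -
    have "(\<integral>x. (Lr x - 1)^2 \<partial>\<Omega>) = (\<integral>x. (Lr x)^2 - 2 * Lr x + 1 \<partial>\<Omega>)"
      by (rule Bochner_Integration.integral_cong) (auto simp: power2_eq_square algebra_simps)
    also have "\<dots> = q - 1" using Lsq Li Lq L1 by (simp add: prob_space)
    finally show ?thesis .
  qed
  finally show ?thesis .
qed

lemma exp_minus_one_le: "0 \<le> (x::real) \<Longrightarrow> exp x - 1 \<le> x * exp x"
proof -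
  assume "0 \<le> x"
  have "1 - x \<le> exp (- x)" using exp_ge_add_one_self[of "-x"] by simp
  then have "(1 - x) * exp x \<le> exp (-x) * exp x" by (intro mult_right_mono) auto
  then show ?thesis by (simp add: algebra_simps flip: exp_add)
qed

lemma var_limit:
  fixes V s2 :: real and n :: nat
  assumes s2: "s2 > 0" and n: "n \<ge> 1" and V: "V \<ge> 0"
    and H: "\<And>t. t \<noteq> 0 \<Longrightarrow> t^2 \<le> (exp (real n * t^2 / s2) - 1) * V"
  shows "s2 / real n \<le> V"
proof -
  have key: "s2 / real n \<le> exp (real n * t^2 / s2) * V" if t: "t \<noteq> 0" for t
  proof -
    define x where "x = real n * t^2 / s2"
    have x0: "x > 0" using t s2 n by (simp add: x_def)
    have "t^2 \<le> (exp x - 1) * V" using H[OF t] by (simp add: x_def)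
    also have "\<dots> \<le> x * exp x * V" using exp_minus_one_le[of x] x0 V by (intro mult_right_mono) auto
    finally have "t^2 \<le> x * (exp x * V)" by simp
    also have "x * (exp x * V) = t^2 * (real n / s2) * (exp x * V)" by (simp add: x_def)
    finally have "t^2 * 1 \<le> t^2 * ((real n / s2) * (exp x * V))" by (simp add: mult.assoc)
    then have "1 \<le> (real n / s2) * (exp x * V)" using t by (subst (asm) mult_le_cancel_left_pos) auto
    then show ?thesis using s2 n by (simp add: x_def field_simps)
  qed
  show ?thesis
  proof (rule ccontr)
    assume "\<not> ?thesis"
    then have lt: "V < s2 / real n" by simp
    show False
    proof (cases "V = 0")
      case True
      have "s2 / real n > 0" using s2 n by simp
      then show False using key[of 1] True by simp
    next
      case False
      with V have Vp: "V > 0" by simp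
      define r where "r = s2 / (real n * V)"
      have r1: "r > 1" using lt Vp n by (simp add: r_def field_simps)
      define y where "y = (1 + r) / 2"
      have y1: "y > 1" "y < r" using r1 by (auto simp: y_def)
      define t where "t = sqrt (s2 * ln y / real n)"
      have ly: "ln y > 0" using y1 by simp
      have tpos: "t > 0" unfolding t_def using ly s2 n by simp
      have "real n * t^2 / s2 = ln y" unfolding t_def using ly s2 n by simp
      then have "exp (real n * t^2 / s2) = y" using y1 by simp
      then have "s2 / real n \<le> y * V" using key[of t] tpos by simp
      also have "\<dots> < r * V" using y1 Vp by simp
      also have "r * V = s2 / real n" using Vp n by (simp add: r_def)
      finally show False by simp
    qed
  qed
qed

definition LL :: "real \<Rightarrow> real \<Rightarrow> ((bool \<times> real) \<times> real) measure" where
  "LL a b = QQ a \<Otimes>\<^sub>M gN b"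
definition lr :: "real \<Rightarrow> real \<Rightarrow> (bool \<times> real) \<times> real \<Rightarrow> real" where
  "lr a b p = exp (a * snd (fst p) - a^2 / 2) * exp (b * snd p - b^2 / 2)"

lemma lr_meas[measurable]: "lr a b \<in> borel_measurable (LL a' b')"
proof -
  have eq: "sets (LL a' b') = sets ((count_space UNIV \<Otimes>\<^sub>M borel) \<Otimes>\<^sub>M borel)"
    unfolding LL_def by (intro sets_pair_measure_cong sets_QQ) simp
  show ?thesis unfolding measurable_cong_sets[OF eq refl] lr_def by measurable
qed

lemma sets_LL[measurable_cong]: "sets (LL a b) = sets ((count_space UNIV \<Otimes>\<^sub>M borel) \<Otimes>\<^sub>M borel)"
  unfolding LL_def by (intro sets_pair_measure_cong sets_QQ) simp

lemma lr_pos: "lr a b p > 0" by (simp add: lr_def)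
lemma lr_nonneg: "lr a b p \<ge> 0" by (simp add: lr_def)
lemma space_LL[simp]: "space (LL a b) = UNIV" by (simp add: LL_def space_pair_measure)

lemma LL_prob: "prob_space (LL a b)" unfolding LL_def by (intro prob_space_pair QQ_prob gN_prob)

lemma QQ_dens: "QQ a = density (QQ 0) (\<lambda>x. ennreal (exp (a * snd x - a^2 / 2)))"
proof -
  have "QQ a = density RR (\<lambda>_. 1) \<Otimes>\<^sub>M density (gN 0) (\<lambda>x. ennreal (exp (a * x - a^2 / 2)))"
    unfolding QQ_def by (simp add: density_1 flip: gN_density)
  also have "\<dots> = density (RR \<Otimes>\<^sub>M gN 0) (\<lambda>(x, y). 1 * ennreal (exp (a * y - a^2 / 2)))"
    by (rule pair_measure_density)
       (auto intro!: prob_space_imp_sigma_finite gN_prob simp flip: gN_density)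
  also have "\<dots> = density (QQ 0) (\<lambda>x. ennreal (exp (a * snd x - a^2 / 2)))"
    unfolding QQ_def by (simp add: case_prod_beta')
  finally show ?thesis .
qed

lemma LL_dens: "LL a b = density (LL 0 0) (\<lambda>p. ennreal (lr a b p))"
proof -
  have "LL a b = density (QQ 0) (\<lambda>x. ennreal (exp (a * snd x - a^2 / 2))) \<Otimes>\<^sub>M density (gN 0) (\<lambda>x. ennreal (exp (b * x - b^2 / 2)))"
    unfolding LL_def by (simp flip: gN_density QQ_dens)
  also have "\<dots> = density (QQ 0 \<Otimes>\<^sub>M gN 0) (\<lambda>(x, y). ennreal (exp (a * snd x - a^2 / 2)) * ennreal (exp (b * y - b^2 / 2)))"
    by (rule pair_measure_density)
       (auto intro!: prob_space_imp_sigma_finite gN_prob simp flip: gN_density)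
  also have "\<dots> = density (LL 0 0) (\<lambda>p. ennreal (lr a b p))"
    unfolding LL_def lr_def by (simp add: case_prod_beta' ennreal_mult)
  finally show ?thesis .
qed

lemma lr_sq: "(lr a b p)^2 = exp (a^2 + b^2) * lr (2 * a) (2 * b) p"
  unfolding lr_def by (simp add: power_mult_distrib power2_eq_square algebra_simps flip: exp_add)

lemma lr_nn1: "(\<integral>\<^sup>+p. ennreal (lr a b p) \<partial>LL 0 0) = 1"
proof -
  interpret prob_space "LL a b" by (rule LL_prob)
  have "emeasure (LL a b) (space (LL 0 0)) = 1" using emeasure_space_1 by simp
  moreover have "emeasure (LL a b) (space (LL 0 0)) = (\<integral>\<^sup>+p. ennreal (lr a b p) * indicator (space (LL 0 0)) p \<partial>LL 0 0)"
    by (subst LL_dens, rule emeasure_density) (simp_all only: sets.top, measurable)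
  moreover have "(\<integral>\<^sup>+p. ennreal (lr a b p) * indicator (space (LL 0 0)) p \<partial>LL 0 0) = (\<integral>\<^sup>+p. ennreal (lr a b p) \<partial>LL 0 0)"
    by (rule nn_integral_cong) simp
  ultimately show ?thesis by simp
qed

lemma lr_int: "integrable (LL 0 0) (lr a b)" "(\<integral>p. lr a b p \<partial>LL 0 0) = 1"
proof -
  show i: "integrable (LL 0 0) (lr a b)"
    using lr_nn1[of a b]
    by (intro integrableI_nonneg) (auto intro!: AE_I2 simp: lr_nonneg)
  have "ennreal (\<integral>p. lr a b p \<partial>LL 0 0) = 1"
    using lr_nn1[of a b] i by (subst nn_integral_eq_integral[symmetric]) (auto intro!: AE_I2 simp: lr_nonneg)
  then show "(\<integral>p. lr a b p \<partial>LL 0 0) = 1" by simp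
qed

lemma lr_sq_nn: "(\<integral>\<^sup>+p. ennreal ((lr a b p)^2) \<partial>LL 0 0) = ennreal (exp (a^2 + b^2))"
  unfolding lr_sq using lr_pos[of "2*a" "2*b"]
  by (simp add: ennreal_mult nn_integral_cmult lr_nn1 less_imp_le)

definition Tm :: "real \<Rightarrow> real \<Rightarrow> real \<Rightarrow> (bool \<times> real) \<times> real \<Rightarrow> real \<times> real" where
  "Tm al c v p = (enc (fst p), Fz al c (enc (fst p)) + sqrt v * snd p)"

lemma enc_meas2[measurable]: "enc \<in> measurable (count_space UNIV \<Otimes>\<^sub>M borel) borel"
  using enc_meas[of 0] unfolding QQ_def[symmetric] measurable_cong_sets[OF sets_QQ refl] .

lemma Tm_meas[measurable]: "Tm al c v \<in> measurable (LL a b) (Zl a' \<Otimes>\<^sub>M gN b')"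
proof -
  have e1: "sets (Zl a' \<Otimes>\<^sub>M gN b') = sets (borel \<Otimes>\<^sub>M borel)" by (intro sets_pair_measure_cong) auto
  show ?thesis unfolding measurable_cong_sets[OF sets_LL e1] Tm_def by measurable
qed

lemma Zl_gN_prob: "prob_space (Zl a \<Otimes>\<^sub>M gN b)" by (intro prob_space_pair Zl_prob gN_prob)

lemma JL:
  assumes v: "v \<ge> 0" and c: "c \<ge> 0"
  shows "joint_law (Dfam al c v a b) = distr (LL a b) (Zl a \<Otimes>\<^sub>M gN 0) (Tm al c v)"
proof -
  interpret cls "al^2 + c^2" v al "Dfam al c v a b"
    by unfold_locales (auto simp: Dfam_class v c)
  interpret gb: sigma_finite_measure "gN b" by (intro prob_space_imp_sigma_finite gN_prob)
  have e1: "sets (Zl a \<Otimes>\<^sub>M gN 0) = sets (zlaw (Dfam al c v a b) \<Otimes>\<^sub>M borel)" by (intro sets_pair_measure_cong) auto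
  show ?thesis
  proof (rule measure_eqI)
    show "sets (joint_law (Dfam al c v a b)) = sets (distr (LL a b) (Zl a \<Otimes>\<^sub>M gN 0) (Tm al c v))"
      using sets_J e1 by simp
    fix A assume A: "A \<in> sets (joint_law (Dfam al c v a b))"
    then have A': "A \<in> sets (Zl a \<Otimes>\<^sub>M borel)" using sets_J by simp
    have [measurable]: "indicator A \<in> borel_measurable (Zl a \<Otimes>\<^sub>M borel)" using A' by simp
    have "emeasure (joint_law (Dfam al c v a b)) A = (\<integral>\<^sup>+x. indicator A x \<partial>joint_law (Dfam al c v a b))"
      using A by simp
    also have "\<dots> = (\<integral>\<^sup>+z. \<integral>\<^sup>+y. indicator A (z, y) \<partial>Yl al c v b z \<partial>Zl a)"
      by (subst J_nn) simp_all
    also have "\<dots> = (\<integral>\<^sup>+z. \<integral>\<^sup>+e. indicator A (z, Fz al c z + sqrt v * e) \<partial>gN b \<partial>Zl a)"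
      unfolding Yl_def by (intro nn_integral_cong, subst nn_integral_distr) auto
    also have "\<dots> = (\<integral>\<^sup>+x. \<integral>\<^sup>+e. indicator A (enc x, Fz al c (enc x) + sqrt v * e) \<partial>gN b \<partial>QQ a)"
    proof (rule Zl_nn)
      have "(\<lambda>(z, e). indicator A (z, Fz al c z + sqrt v * e) :: ennreal) \<in> borel_measurable (borel \<Otimes>\<^sub>M gN b)"
        using A' by (simp add: measurable_cong_sets[OF sets_pair_measure_cong[OF sets_Zl refl] refl])
      then show "(\<lambda>z. \<integral>\<^sup>+e. indicator A (z, Fz al c z + sqrt v * e) \<partial>gN b) \<in> borel_measurable borel"
        by (rule gb.borel_measurable_nn_integral_fst[where f="\<lambda>(z, e). indicator A (z, Fz al c z + sqrt v * e)", simplified])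
    qed
    also have "\<dots> = (\<integral>\<^sup>+p. indicator A (Tm al c v p) \<partial>LL a b)"
      unfolding LL_def Tm_def
      by (subst gb.nn_integral_fst[symmetric]) (use A' in \<open>simp_all add: measurable_cong_sets[OF sets_pair_measure_cong[OF sets_Zl refl] refl]\<close>)
    also have "\<dots> = (\<integral>\<^sup>+x. indicator A x \<partial>distr (LL a b) (Zl a \<Otimes>\<^sub>M gN 0) (Tm al c v))"
      using A' e1 by (subst nn_integral_distr) auto
    also have "\<dots> = emeasure (distr (LL a b) (Zl a \<Otimes>\<^sub>M gN 0) (Tm al c v)) A"
      using A' e1 by (intro nn_integral_indicator) simp
    finally show "emeasure (joint_law (Dfam al c v a b)) A = emeasure (distr (LL a b) (Zl a \<Otimes>\<^sub>M gN 0) (Tm al c v)) A" .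
  qed
qed

definition Lr :: "nat \<Rightarrow> real \<Rightarrow> real \<Rightarrow> (nat \<Rightarrow> (bool \<times> real) \<times> real) \<Rightarrow> real" where
  "Lr n a b \<omega> = (\<Prod>i\<in>{..<n}. lr a b (\<omega> i))"

definition Om :: "nat \<Rightarrow> (nat \<Rightarrow> (bool \<times> real) \<times> real) measure" where
  "Om n = PiM {..<n} (\<lambda>_. LL 0 0)"

lemma Om_prob: "prob_space (Om n)" unfolding Om_def by (rule prob_space_PiM) (rule LL_prob)

lemma sets_Om: "sets (PiM {..<n} (\<lambda>_. LL a b)) = sets (Om n)"
  unfolding Om_def by (intro sets_PiM_cong) (auto simp: sets_LL)

lemma Lr_meas[measurable]: "Lr n a b \<in> borel_measurable (Om n)"
  unfolding Lr_def[abs_def] Om_def by measurable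

lemma Lr_nonneg: "Lr n a b \<omega> \<ge> 0" unfolding Lr_def by (intro prod_nonneg) (simp add: lr_nonneg)

lemma PiLL_dens: "PiM {..<n} (\<lambda>_. LL a b) = density (Om n) (\<lambda>\<omega>. ennreal (Lr n a b \<omega>))"
proof -
  have "PiM {..<n} (\<lambda>_. LL a b) = PiM {..<n} (\<lambda>_. density (LL 0 0) (\<lambda>p. ennreal (lr a b p)))"
    by (simp flip: LL_dens)
  also have "\<dots> = density (Om n) (\<lambda>\<omega>. \<Prod>i\<in>{..<n}. ennreal (lr a b (\<omega> i)))"
    unfolding Om_def by (rule PiM_density) (auto intro: LL_prob simp flip: LL_dens)
  also have "\<dots> = density (Om n) (\<lambda>\<omega>. ennreal (Lr n a b \<omega>))"
    unfolding Lr_def by (simp add: prod_ennreal lr_nonneg)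
  finally show ?thesis .
qed

lemma Lr_facts:
  "integrable (Om n) (\<lambda>\<omega>. (Lr n a b \<omega>)^2)"
  "(\<integral>\<omega>. (Lr n a b \<omega>)^2 \<partial>Om n) = exp (real n * (a^2 + b^2))"
  "(\<integral>\<omega>. Lr n a b \<omega> \<partial>Om n) = 1"
proof -
  interpret PP: product_prob_space "\<lambda>_::nat. LL 0 0" by (rule product_prob_spaceI) (rule LL_prob)
  have nn2: "(\<integral>\<^sup>+\<omega>. ennreal ((Lr n a b \<omega>)^2) \<partial>Om n) = ennreal (exp (real n * (a^2 + b^2)))"
  proof -
    have "(\<integral>\<^sup>+\<omega>. ennreal ((Lr n a b \<omega>)^2) \<partial>Om n) = (\<integral>\<^sup>+\<omega>. (\<Prod>i\<in>{..<n}. ennreal ((lr a b (\<omega> i))^2)) \<partial>Om n)"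
      unfolding Lr_def by (simp add: prod_power_distrib prod_ennreal)
    also have "\<dots> = (\<Prod>i\<in>{..<n}. \<integral>\<^sup>+p. ennreal ((lr a b p)^2) \<partial>LL 0 0)"
      unfolding Om_def by (rule PP.product_nn_integral_prod) auto
    also have "\<dots> = ennreal (exp (a^2 + b^2) ^ n)"
      by (simp add: lr_sq_nn ennreal_power)
    also have "exp (a^2 + b^2) ^ n = exp (real n * (a^2 + b^2))"
      by (simp add: exp_of_nat_mult)
    finally show ?thesis .
  qed
  have nn1: "(\<integral>\<^sup>+\<omega>. ennreal (Lr n a b \<omega>) \<partial>Om n) = 1"
  proof -
    have "(\<integral>\<^sup>+\<omega>. ennreal (Lr n a b \<omega>) \<partial>Om n) = (\<integral>\<^sup>+\<omega>. (\<Prod>i\<in>{..<n}. ennreal (lr a b (\<omega> i))) \<partial>Om n)"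
      unfolding Lr_def by (simp add: prod_ennreal lr_nonneg)
    also have "\<dots> = (\<Prod>i\<in>{..<n}. \<integral>\<^sup>+p. ennreal (lr a b p) \<partial>LL 0 0)"
      unfolding Om_def by (rule PP.product_nn_integral_prod) auto
    also have "\<dots> = 1" by (simp add: lr_nn1)
    finally show ?thesis .
  qed
  show i2: "integrable (Om n) (\<lambda>\<omega>. (Lr n a b \<omega>)^2)"
    using nn2 by (intro integrableI_nonneg) auto
  have "ennreal (\<integral>\<omega>. (Lr n a b \<omega>)^2 \<partial>Om n) = ennreal (exp (real n * (a^2 + b^2)))"
    using nn2 i2 by (subst nn_integral_eq_integral[symmetric]) auto
  then show "(\<integral>\<omega>. (Lr n a b \<omega>)^2 \<partial>Om n) = exp (real n * (a^2 + b^2))" by simp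
  have i1: "integrable (Om n) (Lr n a b)"
    using nn1 by (intro integrableI_nonneg) (auto simp: Lr_nonneg)
  have "ennreal (\<integral>\<omega>. Lr n a b \<omega> \<partial>Om n) = 1"
    using nn1 i1 by (subst nn_integral_eq_integral[symmetric]) (auto simp: Lr_nonneg)
  then show "(\<integral>\<omega>. Lr n a b \<omega> \<partial>Om n) = 1" by simp
qed

definition HG :: "nat \<Rightarrow> ((nat \<Rightarrow> real \<times> real) \<Rightarrow> real) \<Rightarrow> (nat \<Rightarrow> real \<times> real) \<Rightarrow> real" where
  "HG n h \<omega> = h (\<lambda>i\<in>{..<n}. (snd (\<omega> i), Gf (fst (\<omega> i))))"

definition Yv :: "nat \<Rightarrow> real \<Rightarrow> real \<Rightarrow> real \<Rightarrow> ((nat \<Rightarrow> real \<times> real) \<Rightarrow> real) \<Rightarrow> (nat \<Rightarrow> (bool \<times> real) \<times> real) \<Rightarrow> real" where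
  "Yv n al c v h \<omega> = HG n h (compose {..<n} (Tm al c v) \<omega>)"

lemma obs_HG: "(\<lambda>\<omega>. h (obs n (Dfam al c v a b) \<omega>)) = HG n h"
  by (simp add: obs_def HG_def fun_eq_iff)

lemma SS:
  assumes "v \<ge> 0" "c \<ge> 0"
  shows "sample_space n (Dfam al c v a b) = distr (PiM {..<n} (\<lambda>_. LL a b)) (PiM {..<n} (\<lambda>_. Zl a \<Otimes>\<^sub>M gN 0)) (compose {..<n} (Tm al c v))"
  unfolding sample_space_def JL[OF assms]
  by (rule distr_PiM_finite_prob_space'[symmetric]) (auto intro: LL_prob Zl_gN_prob)

lemma obs_meas[measurable]:
  "(\<lambda>\<omega>. \<lambda>i\<in>{..<n}. (snd (\<omega> i), Gf (fst (\<omega> i)))) \<in> measurable (PiM {..<n} (\<lambda>_. Zl a \<Otimes>\<^sub>M gN b)) (PiM {..<n} (\<lambda>_. borel :: (real \<times> real) measure))"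
proof (rule measurable_restrict)
  fix i assume i: "i \<in> {..<n}"
  have "(\<lambda>\<omega>. (snd (\<omega> i), Gf (fst (\<omega> i)))) \<in> measurable (PiM {..<n} (\<lambda>_. Zl a \<Otimes>\<^sub>M gN b)) (borel \<Otimes>\<^sub>M borel)"
    using i by measurable
  then show "(\<lambda>\<omega>. (snd (\<omega> i), Gf (fst (\<omega> i)))) \<in> measurable (PiM {..<n} (\<lambda>_. Zl a \<Otimes>\<^sub>M gN b)) (borel :: (real \<times> real) measure)"
    by (simp add: borel_prod)
qed

lemma HG_meas:
  assumes "h \<in> borel_measurable (PiM {..<n} (\<lambda>_. borel :: (real \<times> real) measure))"
  shows "HG n h \<in> borel_measurable (PiM {..<n} (\<lambda>_. Zl a \<Otimes>\<^sub>M gN b))"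
  unfolding HG_def[abs_def] by (rule measurable_compose[OF obs_meas assms])

lemma compose_meas:
  "compose {..<n} (Tm al c v) \<in> measurable (PiM {..<n} (\<lambda>_. LL a' b')) (PiM {..<n} (\<lambda>_. Zl a \<Otimes>\<^sub>M gN b))"
  unfolding compose_def by (rule measurable_restrict) auto

lemma compose_meas_Om:
  "compose {..<n} (Tm al c v) \<in> measurable (Om n) (PiM {..<n} (\<lambda>_. Zl a \<Otimes>\<^sub>M gN b))"
  using compose_meas[of n al c v 0 0 a b] unfolding Om_def .

lemma Yv_meas[measurable]:
  assumes "h \<in> borel_measurable (PiM {..<n} (\<lambda>_. borel :: (real \<times> real) measure))"
  shows "Yv n al c v h \<in> borel_measurable (Om n)"
  unfolding Yv_def[abs_def] by (rule measurable_compose[OF compose_meas_Om HG_meas[OF assms]])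

lemma transfer:
  assumes v: "v \<ge> 0" and c: "c \<ge> 0"
    and hm: "h \<in> borel_measurable (PiM {..<n} (\<lambda>_. borel :: (real \<times> real) measure))"
  shows "integrable (sample_space n (Dfam al c v a b)) (HG n h) \<longleftrightarrow> integrable (Om n) (\<lambda>\<omega>. Lr n a b \<omega> * Yv n al c v h \<omega>)"
    and "(\<integral>\<omega>. HG n h \<omega> \<partial>sample_space n (Dfam al c v a b)) = (\<integral>\<omega>. Lr n a b \<omega> * Yv n al c v h \<omega> \<partial>Om n)"
proof -
  have Ym: "(\<lambda>\<omega>. HG n h (compose {..<n} (Tm al c v) \<omega>)) \<in> borel_measurable (Om n)"
    using Yv_meas[OF hm] unfolding Yv_def .
  show "integrable (sample_space n (Dfam al c v a b)) (HG n h) \<longleftrightarrow> integrable (Om n) (\<lambda>\<omega>. Lr n a b \<omega> * Yv n al c v h \<omega>)"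
    unfolding SS[OF v c]
    by (subst integrable_distr_eq[OF compose_meas HG_meas[OF hm]], subst PiLL_dens,
        subst integrable_density) (auto simp: Yv_def Ym Lr_nonneg)
  show "(\<integral>\<omega>. HG n h \<omega> \<partial>sample_space n (Dfam al c v a b)) = (\<integral>\<omega>. Lr n a b \<omega> * Yv n al c v h \<omega> \<partial>Om n)"
    unfolding SS[OF v c]
    by (subst integral_distr[OF compose_meas HG_meas[OF hm]], subst PiLL_dens,
        subst integral_density) (auto simp: Yv_def Ym Lr_nonneg)
qed

lemma var00:
  assumes v: "v \<ge> 0" and c: "c \<ge> 0"
    and hm: "h \<in> borel_measurable (PiM {..<n} (\<lambda>_. borel :: (real \<times> real) measure))"
  shows "ennvar (sample_space n (Dfam al c v 0 0)) (HG n h) = ennvar (Om n) (Yv n al c v h)"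
    and "(\<integral>\<omega>. HG n h \<omega> \<partial>sample_space n (Dfam al c v 0 0)) = (\<integral>\<omega>. Yv n al c v h \<omega> \<partial>Om n)"
proof -
  have S: "sample_space n (Dfam al c v 0 0) = distr (Om n) (PiM {..<n} (\<lambda>_. Zl 0 \<Otimes>\<^sub>M gN 0)) (compose {..<n} (Tm al c v))"
    unfolding SS[OF v c] Om_def ..
  show I: "(\<integral>\<omega>. HG n h \<omega> \<partial>sample_space n (Dfam al c v 0 0)) = (\<integral>\<omega>. Yv n al c v h \<omega> \<partial>Om n)"
    unfolding S by (subst integral_distr[OF compose_meas_Om HG_meas[OF hm]]) (simp add: Yv_def[abs_def])
  have hgm[measurable]: "HG n h \<in> borel_measurable (PiM {..<n} (\<lambda>_. Zl 0 \<Otimes>\<^sub>M gN 0))" by (rule HG_meas[OF hm])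
  have m: "(\<lambda>x. ennreal ((HG n h x - k)^2)) \<in> borel_measurable (PiM {..<n} (\<lambda>_. Zl 0 \<Otimes>\<^sub>M gN 0))" for k
    by measurable
  show "ennvar (sample_space n (Dfam al c v 0 0)) (HG n h) = ennvar (Om n) (Yv n al c v h)"
    unfolding ennvar_def I unfolding S
    by (subst nn_integral_distr[OF compose_meas_Om]) (simp_all add: Yv_def[abs_def] m)
qed

lemma lower:
  fixes al c v s2 :: real and n :: nat and h :: "(nat \<Rightarrow> real \<times> real) \<Rightarrow> real"
  assumes v: "v \<ge> 0" and c: "c \<ge> 0" and s2: "s2 = c^2 + v" "s2 > 0" and n: "n \<ge> 1"
    and hm: "h \<in> borel_measurable (PiM {..<n} (\<lambda>_. borel :: (real \<times> real) measure))"
    and unb: "\<And>a b. integrable (sample_space n (Dfam al c v a b)) (HG n h) \<and>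
        (\<integral>\<omega>. HG n h \<omega> \<partial>sample_space n (Dfam al c v a b)) = target (Dfam al c v a b)"
  shows "ennreal (s2 / real n) \<le> ennvar (sample_space n (Dfam al c v 0 0)) (HG n h)"
proof -
  define Y where "Y = Yv n al c v h"
  have Ym[measurable]: "Y \<in> borel_measurable (Om n)" unfolding Y_def by (rule Yv_meas[OF hm])
  have Y0: "(\<integral>\<omega>. Y \<omega> \<partial>Om n) = 0"
    using var00(2)[OF v c hm] unb[of 0 0] by (simp add: Y_def target_Dfam)
  have E: "ennvar (sample_space n (Dfam al c v 0 0)) (HG n h) = ennvar (Om n) Y"
    using var00(1)[OF v c hm] by (simp add: Y_def)
  show ?thesis
  proof (cases "ennvar (Om n) Y = \<infinity>")
    case True
    then show ?thesis using E by simp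
  next
    case False
    have Ysq: "integrable (Om n) (\<lambda>\<omega>. (Y \<omega>)^2)"
      by (rule ennvar_finite_sq_int[OF Om_prob Ym False])
    define V where "V = (\<integral>\<omega>. (Y \<omega>)^2 \<partial>Om n)"
    have EV: "ennvar (Om n) Y = ennreal V"
      using ennvar_eq[OF Om_prob Ym Ysq] Y0 by (simp add: V_def)
    have V0: "V \<ge> 0" unfolding V_def by simp
    have H: "t^2 \<le> (exp (real n * t^2 / s2) - 1) * V" if t: "t \<noteq> 0" for t
    proof -
      define a where "a = c * t / s2"
      define b where "b = sqrt v * t / s2"
      have "c * a + sqrt v * b = (c * c * t + v * t) / s2"
        using v by (simp add: a_def b_def add_divide_distrib mult.assoc[symmetric])
      also have "\<dots> = s2 * t / s2" using s2 v by (simp add: power2_eq_square algebra_simps)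
      also have "\<dots> = t" using s2 by simp
      finally have tg: "target (Dfam al c v a b) = t" by (simp add: target_Dfam)
      have "a^2 + b^2 = (c^2 + (sqrt v)^2) * t^2 / s2^2"
        by (simp add: a_def b_def power_divide power_mult_distrib add_divide_distrib algebra_simps)
      also have "\<dots> = s2 * t^2 / s2^2" using s2 v by simp
      also have "\<dots> = t^2 / s2" using s2 by (simp add: power2_eq_square)
      finally have ab: "a^2 + b^2 = t^2 / s2" .
      have LY: "(\<integral>\<omega>. Lr n a b \<omega> * Y \<omega> \<partial>Om n) = t"
        using transfer(2)[OF v c hm, where a=a and b=b and al=al] unb[of a b] tg by (simp add: Y_def)
      have "t^2 \<le> (exp (real n * (a^2 + b^2)) - 1) * V"
        unfolding V_def
        by (rule hcr[OF Om_prob Lr_meas Ym Lr_facts(1) Lr_facts(2) Lr_facts(3) Ysq Y0 LY])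
      then show ?thesis by (simp add: ab)
    qed
    have "s2 / real n \<le> V" by (rule var_limit[OF s2(2) n V0 H])
    then show ?thesis using E EV by (simp add: ennreal_leI)
  qed
qed

theorem theorem1:
  fixes sf2 sa2 \<alpha> :: real and n :: nat
  assumes "sf2 > 0" and "sa2 \<ge> 0" and "\<bar>\<alpha>\<bar> \<le> sqrt sf2" and "n \<ge> 1"
  shows
   "(\<forall>D :: 'z hdist. D \<in> dist_class sf2 sa2 \<alpha> \<longrightarrow>
        ennvar (sample_space n D) (cv_est n \<alpha> D)
          = ennreal ((sf2 * (1 - (\<alpha> / sqrt sf2)^2) + sa2) / real n)) \<and>
    (\<forall>h :: (nat \<Rightarrow> real \<times> real) \<Rightarrow> real.
       h \<in> borel_measurable (\<Pi>\<^sub>M i\<in>{..<n}. (borel :: (real \<times> real) measure)) \<and>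
       (\<forall>D \<in> (dist_class sf2 sa2 \<alpha> :: real hdist set).
          integrable (sample_space n D) (\<lambda>\<omega>. h (obs n D \<omega>)) \<and>
          (\<integral>\<omega>. h (obs n D \<omega>) \<partial>sample_space n D) = target D)
       \<longrightarrow>
       (SUP D \<in> (dist_class sf2 sa2 \<alpha> :: real hdist set).
            ennvar (sample_space n D) (\<lambda>\<omega>. h (obs n D \<omega>)))
         \<ge> ennreal ((sf2 * (1 - (\<alpha> / sqrt sf2)^2) + sa2) / real n) \<and>
       ennreal ((sf2 * (1 - (\<alpha> / sqrt sf2)^2) + sa2) / real n)
         = (SUP D \<in> (dist_class sf2 sa2 \<alpha> :: real hdist set).
              ennvar (sample_space n D) (cv_est n \<alpha> D)))"
proof -
  note sf = assms(1) and sa = assms(2) and al = assms(3) and n = assms(4)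
  define W0 where "W0 = sf2 * (1 - (\<alpha> / sqrt sf2)^2) + sa2"
  have W0': "W0 = sa2 + (sf2 - \<alpha>^2)"
    using sf by (simp add: W0_def power_divide algebra_simps)
  have part1: "ennvar (sample_space n D) (cv_est n \<alpha> D) = ennreal (W0 / real n)"
    if "D \<in> dist_class sf2 sa2 \<alpha>" for D :: "'y hdist"
  proof -
    have "in_class sf2 sa2 \<alpha> D" using that by (simp add: dist_class_def)
    then interpret cls sf2 sa2 \<alpha> D by unfold_locales (use sf sa in auto)
    show ?thesis using part_i[OF n] W0' by simp
  qed
  have a2: "\<alpha>^2 \<le> sf2"
  proof -
    have "\<bar>\<alpha>\<bar>^2 \<le> (sqrt sf2)^2" using al by (intro power_mono) auto
    then show ?thesis using sf by (simp only: power2_abs real_sqrt_pow2[OF less_imp_le[OF sf]])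
  qed
  define c where "c = sqrt (sf2 - \<alpha>^2)"
  have c0: "c \<ge> 0" unfolding c_def using a2 by simp
  have c2: "\<alpha>^2 + c^2 = sf2" unfolding c_def using a2 by simp
  have mem: "Dfam \<alpha> c sa2 a b \<in> (dist_class sf2 sa2 \<alpha> :: real hdist set)" for a b
    using Dfam_class[OF sa c0, of \<alpha> a b] c2 by (simp add: dist_class_def)
  have ne: "(dist_class sf2 sa2 \<alpha> :: real hdist set) \<noteq> {}" using mem by blast
  have s2: "c^2 + sa2 = W0" using c2 W0' by simp
  show ?thesis
  proof (intro conjI allI impI)
    fix D :: "'z hdist" assume "D \<in> dist_class sf2 sa2 \<alpha>"
    then show "ennvar (sample_space n D) (cv_est n \<alpha> D) = ennreal ((sf2 * (1 - (\<alpha> / sqrt sf2)^2) + sa2) / real n)"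
      using part1 unfolding W0_def by blast
  next
    fix h :: "(nat \<Rightarrow> real \<times> real) \<Rightarrow> real"
    assume H: "h \<in> borel_measurable (\<Pi>\<^sub>M i\<in>{..<n}. (borel :: (real \<times> real) measure)) \<and>
       (\<forall>D \<in> (dist_class sf2 sa2 \<alpha> :: real hdist set).
          integrable (sample_space n D) (\<lambda>\<omega>. h (obs n D \<omega>)) \<and>
          (\<integral>\<omega>. h (obs n D \<omega>) \<partial>sample_space n D) = target D)"
    then have hm: "h \<in> borel_measurable (\<Pi>\<^sub>M i\<in>{..<n}. (borel :: (real \<times> real) measure))" by simp
    have unb: "integrable (sample_space n (Dfam \<alpha> c sa2 a b)) (HG n h) \<and>
        (\<integral>\<omega>. HG n h \<omega> \<partial>sample_space n (Dfam \<alpha> c sa2 a b)) = target (Dfam \<alpha> c sa2 a b)" for a b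
    proof -
      have "integrable (sample_space n (Dfam \<alpha> c sa2 a b)) (\<lambda>\<omega>. h (obs n (Dfam \<alpha> c sa2 a b) \<omega>)) \<and>
        (\<integral>\<omega>. h (obs n (Dfam \<alpha> c sa2 a b) \<omega>) \<partial>sample_space n (Dfam \<alpha> c sa2 a b)) = target (Dfam \<alpha> c sa2 a b)"
        using H mem[of a b] by blast
      then show ?thesis by (simp only: obs_HG)
    qed
    have "ennreal (W0 / real n) \<le> ennvar (sample_space n (Dfam \<alpha> c sa2 0 0)) (HG n h)"
    proof (cases "W0 = 0")
      case True
      then show ?thesis by simp
    next
      case False
      have "W0 \<ge> 0" using s2 sa c0 by auto
      with False have "W0 > 0" by simp
      then show ?thesis
        by (rule lower[OF sa c0 s2[symmetric] _ n hm unb])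
    qed
    also have "ennvar (sample_space n (Dfam \<alpha> c sa2 0 0)) (HG n h)
        = ennvar (sample_space n (Dfam \<alpha> c sa2 0 0)) (\<lambda>\<omega>. h (obs n (Dfam \<alpha> c sa2 0 0) \<omega>))"
      by (simp add: obs_HG)
    also have "\<dots> \<le> (SUP D \<in> (dist_class sf2 sa2 \<alpha> :: real hdist set).
            ennvar (sample_space n D) (\<lambda>\<omega>. h (obs n D \<omega>)))"
      by (rule SUP_upper[OF mem])
    finally show "(SUP D \<in> (dist_class sf2 sa2 \<alpha> :: real hdist set).
            ennvar (sample_space n D) (\<lambda>\<omega>. h (obs n D \<omega>)))
         \<ge> ennreal ((sf2 * (1 - (\<alpha> / sqrt sf2)^2) + sa2) / real n)"
      unfolding W0_def .
  next
    fix h :: "(nat \<Rightarrow> real \<times> real) \<Rightarrow> real"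
    have "(SUP D \<in> (dist_class sf2 sa2 \<alpha> :: real hdist set). ennvar (sample_space n D) (cv_est n \<alpha> D))
        = (SUP D \<in> (dist_class sf2 sa2 \<alpha> :: real hdist set). ennreal (W0 / real n))"
      by (rule SUP_cong[OF refl]) (rule part1)
    also have "\<dots> = ennreal (W0 / real n)" using ne by simp
    finally show "ennreal ((sf2 * (1 - (\<alpha> / sqrt sf2)^2) + sa2) / real n)
         = (SUP D \<in> (dist_class sf2 sa2 \<alpha> :: real hdist set).
              ennvar (sample_space n D) (cv_est n \<alpha> D))"
      unfolding W0_def by simp
  qed
qed

end
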